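(* Let ${\cal D}\subset\mathbb{R}^2$ be a quadriculated disk and ${\cal R}={\cal D}\times[0,2]$. The set of slab tilings of ${\cal R}$ is either empty or connected under flips.
   Context: A quadriculated disk is a connected, simply connected finite union of unit squares $[x,x+1]\times[y,y+1]$, $(x,y)\in\mathbb{Z}^2$. A slab is a $2\times2\times1$ box (any orientation) which is a union of four unit cubes $[x,x+1]\times[y,y+1]\times[z,z+1]$. A slab tiling of ${\cal R}$ is a decomposition of ${\cal R}$ into slabs with disjoint interiors. A flip takes two slabs of the tiling whose union is a $2\times2\times2$ cube and replaces them by one of the two other pairs of slabs tiling that cube. "Connected under flips" means that any two tilings are joined by a finite sequence of flips. *)

theory Defs
  imports "HOL-Analysis.Analysis"
begin

text \<open>Unit squares of the plane are indexed by their lower-left corner (x,y) in Z^2;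
  unit cubes of space by their lower corner (x,y,z) in Z^3.\<close>

definition unit_square :: "int \<times> int \<Rightarrow> (real \<times> real) set" where
  "unit_square p = {(a, b). real_of_int (fst p) \<le> a \<and> a \<le> real_of_int (fst p) + 1 \<and>
                            real_of_int (snd p) \<le> b \<and> b \<le> real_of_int (snd p) + 1}"

definition squares_union :: "(int \<times> int) set \<Rightarrow> (real \<times> real) set" where
  "squares_union D = (\<Union>p\<in>D. unit_square p)"

definition quadriculated_disk :: "(int \<times> int) set \<Rightarrow> bool" where
  "quadriculated_disk D \<longleftrightarrow> finite D \<and> D \<noteq> {} \<and>
     connected (squares_union D) \<and> simply_connected (squares_union D)"

definition cylinder2 :: "(int \<times> int) set \<Rightarrow> (int \<times> int \<times> int) set" where
  "cylinder2 D = {(x, y, z). (x, y) \<in> D \<and> (z = 0 \<or> z = 1)}"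

definition slab :: "(int \<times> int \<times> int) set \<Rightarrow> bool" where
  "slab S \<longleftrightarrow> (\<exists>x y z.
      S = {(x + i, y + j, z) | i j. i \<in> {0, 1} \<and> j \<in> {0, 1}} \<or>
      S = {(x + i, y, z + k) | i k. i \<in> {0, 1} \<and> k \<in> {0, 1}} \<or>
      S = {(x, y + j, z + k) | j k. j \<in> {0, 1} \<and> k \<in> {0, 1}})"

definition cube2 :: "(int \<times> int \<times> int) set \<Rightarrow> bool" where
  "cube2 C \<longleftrightarrow> (\<exists>x y z. C = {(x + i, y + j, z + k) | i j k.
      i \<in> {0, 1} \<and> j \<in> {0, 1} \<and> k \<in> {0, 1}})"

text \<open>A slab tiling of a region R: a set of slabs with disjoint interiors
  (equivalently, pairwise disjoint sets of unit cubes) whose union is R.\<close>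
definition slab_tiling :: "(int \<times> int \<times> int) set \<Rightarrow> (int \<times> int \<times> int) set set \<Rightarrow> bool" where
  "slab_tiling R T \<longleftrightarrow> (\<forall>S\<in>T. slab S) \<and>
     (\<forall>S1\<in>T. \<forall>S2\<in>T. S1 \<noteq> S2 \<longrightarrow> S1 \<inter> S2 = {}) \<and> \<Union>T = R"

definition flip :: "(int \<times> int \<times> int) set set \<Rightarrow> (int \<times> int \<times> int) set set \<Rightarrow> bool" where
  "flip T T' \<longleftrightarrow> (\<exists>S1 S2 S1' S2'.
      S1 \<in> T \<and> S2 \<in> T \<and> S1 \<noteq> S2 \<and> cube2 (S1 \<union> S2) \<and>
      slab S1' \<and> slab S2' \<and> S1' \<inter> S2' = {} \<and> S1' \<union> S2' = S1 \<union> S2 \<and>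
      {S1', S2'} \<noteq> {S1, S2} \<and>
      T' = (T - {S1, S2}) \<union> {S1', S2'})"

end

theory Submission
  imports Defs "HOL-Analysis.Analysis"
begin


type_synonym cell = "int \<times> int"

definition nbr :: "cell \<Rightarrow> cell \<Rightarrow> bool" where
  "nbr p q \<longleftrightarrow> (fst p = fst q \<and> \<bar>snd p - snd q\<bar> = 1) \<or> (snd p = snd q \<and> \<bar>fst p - fst q\<bar> = 1)"

definition dtiling :: "cell set \<Rightarrow> cell set set \<Rightarrow> bool" where
  "dtiling D T \<longleftrightarrow> (\<forall>d\<in>T. \<exists>p q. nbr p q \<and> d = {p,q}) \<and>
     (\<forall>d1\<in>T. \<forall>d2\<in>T. d1 \<noteq> d2 \<longrightarrow> d1 \<inter> d2 = {}) \<and> \<Union>T = D"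

definition dflip :: "cell set set \<Rightarrow> cell set set \<Rightarrow> bool" where
  "dflip T T' \<longleftrightarrow> (\<exists>x y.
     ({(x,y),(x+1,y)} \<in> T \<and> {(x,y+1),(x+1,y+1)} \<in> T \<and>
       T' = (T - {{(x,y),(x+1,y)}, {(x,y+1),(x+1,y+1)}}) \<union> {{(x,y),(x,y+1)}, {(x+1,y),(x+1,y+1)}}) \<or>
     ({(x,y),(x,y+1)} \<in> T \<and> {(x+1,y),(x+1,y+1)} \<in> T \<and>
       T' = (T - {{(x,y),(x,y+1)}, {(x+1,y),(x+1,y+1)}}) \<union> {{(x,y),(x+1,y)}, {(x,y+1),(x+1,y+1)}}))"

definition Qc :: "cell set \<Rightarrow> bool" where
  "Qc D \<longleftrightarrow> (\<forall>q r. q \<notin> D \<longrightarrow> r \<notin> D \<longrightarrow>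
      (q, r) \<in> {(c, c'). c \<notin> D \<and> c' \<notin> D \<and> nbr c c'}\<^sup>*)"

definition col :: "int \<Rightarrow> int \<Rightarrow> int" where
  "col x y = (if even (x + y) then 1 else -1)"

lemma col_up[simp]: "col x (y+1) = - col x y"
  by (simp add: col_def add.assoc[symmetric])
lemma col_down[simp]: "col x (y-1) = - col x y"
  by (simp add: col_def)
lemma col_right[simp]: "col (x+1) y = - col x y"
  by (simp add: col_def algebra_simps)
lemma col_left[simp]: "col (x-1) y = - col x y"
  by (simp add: col_def algebra_simps)
lemma col_up'[simp]: "col x (1+y) = - col x y"
  by (metis add.commute col_up)
lemma col_right'[simp]: "col (1+x) y = - col x y"
  by (metis add.commute col_right)
lemma col_cases: "col x y = 1 \<or> col x y = -1"
  by (simp add: col_def)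

definition fH :: "cell set set \<Rightarrow> int \<Rightarrow> int \<Rightarrow> int" where
  "fH T x y = (if {(x,y),(x,y-1)} \<in> T then -3 else 1) * col x y"
definition fV :: "cell set set \<Rightarrow> int \<Rightarrow> int \<Rightarrow> int" where
  "fV T x y = (if {(x-1,y),(x,y)} \<in> T then -3 else 1) * col (x-1) y"

definition cnt :: "cell set set \<Rightarrow> int \<Rightarrow> int \<Rightarrow> int" where
  "cnt T x y = (if {(x,y),(x,y-1)} \<in> T then 1 else 0) + (if {(x,y),(x+1,y)} \<in> T then 1 else 0)
     + (if {(x,y+1),(x,y)} \<in> T then 1 else 0) + (if {(x-1,y),(x,y)} \<in> T then 1 else 0)"

lemma curl_eq: "fH T x y + fV T (x+1) y - fH T x (y+1) - fV T x y = 4 * col x y * (1 - cnt T x y)"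
  by (simp add: fH_def fV_def cnt_def algebra_simps)

lemma dtiling_mem: "dtiling D T \<Longrightarrow> {p,q} \<in> T \<Longrightarrow> p \<in> D \<and> q \<in> D"
  unfolding dtiling_def by blast

lemma nbr_cases: "nbr p q \<Longrightarrow> q = (fst p + 1, snd p) \<or> q = (fst p - 1, snd p) \<or> q = (fst p, snd p + 1) \<or> q = (fst p, snd p - 1)"
proof -
  assume "nbr p q"
  then have "(fst q = fst p \<and> (snd q = snd p + 1 \<or> snd q = snd p - 1)) \<or> (snd q = snd p \<and> (fst q = fst p + 1 \<or> fst q = fst p - 1))"
    unfolding nbr_def by arith
  then show ?thesis by (cases p; cases q) auto
qed

lemma cnt_out: assumes T: "dtiling D T" and c: "(x,y) \<notin> D" shows "cnt T x y = 0"
proof -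
  have "\<And>q. {(x,y),q} \<notin> T" "\<And>q. {q,(x,y)} \<notin> T" using dtiling_mem[OF T] c by blast+
  then show ?thesis unfolding cnt_def by simp
qed

lemma cnt_in: assumes T: "dtiling D T" and c: "(x,y) \<in> D" shows "cnt T x y = 1"
proof -
  have U: "\<Union>T = D" using T by (simp add: dtiling_def)
  from c U obtain d where d: "d \<in> T" "(x,y) \<in> d" by blast
  have dom: "\<forall>d\<in>T. \<exists>p q. nbr p q \<and> d = {p,q}" using T by (simp add: dtiling_def)
  from dom d obtain p q where pq: "nbr p q" "d = {p,q}" by blast
  have disj: "\<And>d1 d2. d1 \<in> T \<Longrightarrow> d2 \<in> T \<Longrightarrow> d1 \<noteq> d2 \<Longrightarrow> d1 \<inter> d2 = {}"
    using T unfolding dtiling_def by blast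
  have nb: "nbr (x,y) (if p = (x,y) then q else p)"
    using pq d by (auto simp: nbr_def abs_minus_commute)
  have dd: "d = {(x,y), (if p = (x,y) then q else p)}" using pq d by auto
  have memiff: "\<And>e. (x,y) \<in> e \<Longrightarrow> (e \<in> T \<longleftrightarrow> e = d)"
    using disj d by blast
  have A: "{(x,y),(x,y-1)} \<in> T \<longleftrightarrow> {(x,y),(x,y-1)} = d" by (rule memiff) simp
  have B: "{(x,y),(x+1,y)} \<in> T \<longleftrightarrow> {(x,y),(x+1,y)} = d" by (rule memiff) simp
  have C: "{(x,y+1),(x,y)} \<in> T \<longleftrightarrow> {(x,y+1),(x,y)} = d" by (rule memiff) simp
  have E: "{(x-1,y),(x,y)} \<in> T \<longleftrightarrow> {(x-1,y),(x,y)} = d" by (rule memiff) simp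
  show ?thesis
    unfolding cnt_def A B C E dd
    using nbr_cases[OF nb] by (elim disjE) (simp_all add: doubleton_eq_iff)
qed


lemma cnt_eq: "dtiling D T1 \<Longrightarrow> dtiling D T2 \<Longrightarrow> cnt T1 x y = cnt T2 x y"
  by (cases "(x,y) \<in> D") (simp_all add: cnt_in cnt_out)

definition ivert :: "cell set \<Rightarrow> cell \<Rightarrow> bool" where
  "ivert D v \<longleftrightarrow> v \<in> D \<and> (fst v - 1, snd v) \<in> D \<and> (fst v, snd v - 1) \<in> D \<and> (fst v - 1, snd v - 1) \<in> D"

definition ustep :: "cell \<Rightarrow> cell \<Rightarrow> bool" where
  "ustep v w \<longleftrightarrow> w = (fst v + 1, snd v) \<or> w = (fst v - 1, snd v) \<or> w = (fst v, snd v + 1) \<or> w = (fst v, snd v - 1)"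

definition fe :: "cell set set \<Rightarrow> cell \<Rightarrow> cell \<Rightarrow> int" where
  "fe T v w = (if w = (fst v + 1, snd v) then fH T (fst v) (snd v)
     else if w = (fst v - 1, snd v) then - fH T (fst w) (snd w)
     else if w = (fst v, snd v + 1) then fV T (fst v) (snd v)
     else if w = (fst v, snd v - 1) then - fV T (fst w) (snd w) else 0)"

definition gpot :: "int \<Rightarrow> cell set set \<Rightarrow> cell set set \<Rightarrow> cell \<Rightarrow> int" where
  "gpot a T1 T2 v = (\<Sum>i\<in>{a..<fst v}. fH T1 i (snd v) - fH T2 i (snd v))"

definition curl :: "cell set set \<Rightarrow> int \<Rightarrow> int \<Rightarrow> int" where
  "curl T x y = 4 * col x y * (1 - cnt T x y)"

definition wstep :: "cell \<Rightarrow> cell \<Rightarrow> cell \<Rightarrow> int" where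
  "wstep c v w = (if w = (fst v, snd v + 1) \<and> snd v = snd c \<and> fst c < fst v then 1
     else if w = (fst v, snd v - 1) \<and> snd w = snd c \<and> fst c < fst v then -1 else 0)"

definition wind :: "(nat \<Rightarrow> cell) \<Rightarrow> nat \<Rightarrow> cell \<Rightarrow> int" where
  "wind p n c = (\<Sum>k<n. wstep c (p k) (p (Suc k)))"

definition cwalk :: "cell set \<Rightarrow> (nat \<Rightarrow> cell) \<Rightarrow> nat \<Rightarrow> bool" where
  "cwalk D p n \<longleftrightarrow> p n = p 0 \<and> (\<forall>k<n. ustep (p k) (p (Suc k))) \<and> (\<forall>k\<le>n. ivert D (p k))"

lemma fe_sign: "ustep v w \<Longrightarrow> \<exists>s. (s = 1 \<or> s = -1) \<and> (\<forall>T. fe T v w = s \<or> fe T v w = -3 * s)"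
proof -
  assume st: "ustep v w"
  obtain x y where v: "v = (x,y)" by (cases v)
  have cx: "col x y = 1 \<or> col x y = -1" "col (x-1) y = 1 \<or> col (x-1) y = -1"
     "col x (y-1) = 1 \<or> col x (y-1) = -1" "col (x-1) (y-1) = 1 \<or> col (x-1) (y-1) = -1"
    by (rule col_cases)+
  from st v show ?thesis
    unfolding ustep_def
  proof (elim disjE)
    assume w: "w = (fst v + 1, snd v)"
    show ?thesis
      by (rule exI[of _ "col x y"]) (use cx in \<open>auto simp: fe_def fH_def v w\<close>)
  next
    assume w: "w = (fst v - 1, snd v)"
    show ?thesis
      by (rule exI[of _ "- col (x-1) y"]) (use cx in \<open>auto simp: fe_def fH_def v w\<close>)
  next
    assume w: "w = (fst v, snd v + 1)"
    show ?thesis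
      by (rule exI[of _ "col (x-1) y"]) (use cx in \<open>auto simp: fe_def fV_def v w\<close>)
  next
    assume w: "w = (fst v, snd v - 1)"
    show ?thesis
      by (rule exI[of _ "- col (x-1) (y-1)"]) (use cx in \<open>auto simp: fe_def fV_def v w\<close>)
  qed
qed

locale reg =
  fixes D :: "cell set" and a b :: int
  assumes finD: "finite D" and lo: "\<And>p. p \<in> D \<Longrightarrow> a < fst p" and hi: "\<And>p. p \<in> D \<Longrightarrow> fst p < b"
    and Q: "Qc D"
begin

lemma fH_out: "dtiling D T \<Longrightarrow> (x,y) \<notin> D \<or> (x,y-1) \<notin> D \<Longrightarrow> fH T x y = col x y"
  unfolding fH_def using dtiling_mem[of D T "(x,y)" "(x,y-1)"] by auto

lemma fV_out: "dtiling D T \<Longrightarrow> (x-1,y) \<notin> D \<or> (x,y) \<notin> D \<Longrightarrow> fV T x y = col (x-1) y"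
  unfolding fV_def using dtiling_mem[of D T "(x-1,y)" "(x,y)"] by auto

lemma left_out: "x \<le> a \<Longrightarrow> (x,y) \<notin> D"
  using lo[of "(x,y)"] by auto

lemma right_out: "b \<le> x \<Longrightarrow> (x,y) \<notin> D"
  using hi[of "(x,y)"] by auto

context
  fixes T1 T2 assumes T1: "dtiling D T1" and T2: "dtiling D T2"
begin

lemma gH: "gpot a T1 T2 (x+1,y) - gpot a T1 T2 (x,y) = fH T1 x y - fH T2 x y"
proof (cases "a \<le> x")
  case True
  then have "{a..<x+1} = insert x {a..<x}" by auto
  then show ?thesis unfolding gpot_def by simp
next
  case False
  then show ?thesis unfolding gpot_def
    using fH_out[OF T1, of x y] fH_out[OF T2, of x y] left_out[of x y] by simp
qed

lemma gV_base: "x \<le> a \<Longrightarrow> gpot a T1 T2 (x,y+1) - gpot a T1 T2 (x,y) = fV T1 x y - fV T2 x y"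
  unfolding gpot_def using fV_out[OF T1, of x y] fV_out[OF T2, of x y] left_out[of x y] by simp

lemma gV: "gpot a T1 T2 (x,y+1) - gpot a T1 T2 (x,y) = fV T1 x y - fV T2 x y"
proof (cases "x \<le> a")
  case True then show ?thesis by (rule gV_base)
next
  case False
  have "\<forall>y. gpot a T1 T2 (a + int n,y+1) - gpot a T1 T2 (a + int n,y) = fV T1 (a + int n) y - fV T2 (a + int n) y" for n
  proof (induction n)
    case 0 then show ?case using gV_base by simp
  next
    case (Suc n)
    show ?case
    proof
      fix y
      let ?x = "a + int n"
      have e: "a + int (Suc n) = ?x + 1" by simp
      have c1: "fH T1 ?x y + fV T1 (?x+1) y - fH T1 ?x (y+1) - fV T1 ?x y = fH T2 ?x y + fV T2 (?x+1) y - fH T2 ?x (y+1) - fV T2 ?x y"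
        unfolding curl_eq using cnt_eq[OF T1 T2] by simp
      show "gpot a T1 T2 (a + int (Suc n),y+1) - gpot a T1 T2 (a + int (Suc n),y) = fV T1 (a + int (Suc n)) y - fV T2 (a + int (Suc n)) y"
        unfolding e using gH[of ?x "y+1"] gH[of ?x y] spec[OF Suc.IH, of y] c1 by linarith
    qed
  qed
  from this[of "nat (x - a)"] False show ?thesis by simp
qed

lemma fe_pot: "ustep v w \<Longrightarrow> fe T1 v w - fe T2 v w = gpot a T1 T2 w - gpot a T1 T2 v"
proof -
  assume st: "ustep v w"
  obtain x y where v: "v = (x,y)" by (cases v)
  from st v show ?thesis unfolding ustep_def
  proof (elim disjE)
    assume w: "w = (fst v + 1, snd v)" show ?thesis using gH[of x y] by (simp add: fe_def v w)
  next
    assume w: "w = (fst v - 1, snd v)" show ?thesis using gH[of "x-1" y] by (simp add: fe_def v w)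
  next
    assume w: "w = (fst v, snd v + 1)" show ?thesis using gV[of x y] by (simp add: fe_def v w)
  next
    assume w: "w = (fst v, snd v - 1)" show ?thesis using gV[of x "y-1"] by (simp add: fe_def v w)
  qed
qed

lemma gpot_corner:
  assumes "(x,y) \<notin> D"
  shows "gpot a T1 T2 (x+1,y) = gpot a T1 T2 (x,y)" "gpot a T1 T2 (x,y+1) = gpot a T1 T2 (x,y)"
    "gpot a T1 T2 (x+1,y+1) = gpot a T1 T2 (x,y)"
proof -
  show 1: "gpot a T1 T2 (x+1,y) = gpot a T1 T2 (x,y)"
    using gH[of x y] fH_out[OF T1, of x y] fH_out[OF T2, of x y] assms by simp
  show 2: "gpot a T1 T2 (x,y+1) = gpot a T1 T2 (x,y)"
    using gV[of x y] fV_out[OF T1, of x y] fV_out[OF T2, of x y] assms by simp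
  show "gpot a T1 T2 (x+1,y+1) = gpot a T1 T2 (x,y)"
    using gH[of x "y+1"] fH_out[OF T1, of x "y+1"] fH_out[OF T2, of x "y+1"] assms 2 by simp
qed

lemma gpot_nbr: "c \<notin> D \<Longrightarrow> c' \<notin> D \<Longrightarrow> nbr c c' \<Longrightarrow> gpot a T1 T2 c = gpot a T1 T2 c'"
proof -
  assume c: "c \<notin> D" and c': "c' \<notin> D" and n: "nbr c c'"
  obtain x y where cc: "c = (x,y)" by (cases c)
  from nbr_cases[OF n] show ?thesis
  proof (elim disjE)
    assume "c' = (fst c + 1, snd c)" then show ?thesis using gpot_corner(1)[of x y] c cc by simp
  next
    assume e: "c' = (fst c - 1, snd c)"
    then show ?thesis using gpot_corner(1)[of "x-1" y] c' cc by simp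
  next
    assume "c' = (fst c, snd c + 1)" then show ?thesis using gpot_corner(2)[of x y] c cc by simp
  next
    assume e: "c' = (fst c, snd c - 1)"
    then show ?thesis using gpot_corner(2)[of x "y-1"] c' cc by simp
  qed
qed

lemma gpot_out: assumes "c \<notin> D" shows "gpot a T1 T2 c = 0"
proof -
  let ?R = "{(c, c'). c \<notin> D \<and> c' \<notin> D \<and> nbr c c'}"
  have h: "(a-1,0) \<notin> D" by (rule left_out) simp
  have "(c, (a-1,0)) \<in> ?R\<^sup>*" using Q[unfolded Qc_def, rule_format, OF assms h] .
  then have "gpot a T1 T2 c = gpot a T1 T2 (a-1,0)"
  proof (induction rule: converse_rtrancl_induct)
    case base then show ?case by simp
  next
    case (step y z) then show ?case using gpot_nbr[of y z] by simp
  qed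
  also have "\<dots> = 0" unfolding gpot_def by simp
  finally show ?thesis .
qed

lemma gpot_nonint: assumes "\<not> ivert D v" shows "gpot a T1 T2 v = 0"
proof -
  obtain x y where v: "v = (x,y)" by (cases v)
  from assms v have "(x,y) \<notin> D \<or> (x-1,y) \<notin> D \<or> (x,y-1) \<notin> D \<or> (x-1,y-1) \<notin> D"
    unfolding ivert_def by auto
  then show ?thesis
  proof (elim disjE)
    assume "(x,y) \<notin> D" then show ?thesis using gpot_out v by simp
  next
    assume h: "(x-1,y) \<notin> D" show ?thesis using gpot_corner(1)[OF h] gpot_out[OF h] v by simp
  next
    assume h: "(x,y-1) \<notin> D" show ?thesis using gpot_corner(2)[OF h] gpot_out[OF h] v by simp
  next
    assume h: "(x-1,y-1) \<notin> D" show ?thesis using gpot_corner(3)[OF h] gpot_out[OF h] v by simp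
  qed
qed

end


lemma ivert_bounds: "ivert D v \<Longrightarrow> a + 1 < fst v \<and> fst v < b"
  unfolding ivert_def using lo[of "(fst v - 1, snd v)"] hi[of v] by auto

lemma wstep_right: "ivert D v \<Longrightarrow> ivert D w \<Longrightarrow> ustep v w \<Longrightarrow> c \<notin> D \<or> (fst c + 1, snd c) \<notin> D \<Longrightarrow>
   wstep c v w = wstep (fst c + 1, snd c) v w"
  apply (cases v; cases w; cases c)
  apply (auto simp: wstep_def ustep_def ivert_def)
  apply (smt (verit))+
  done

definition th :: "cell \<Rightarrow> cell \<Rightarrow> int" where
  "th c v = (if snd v = snd c + 1 \<and> fst c < fst v then 1 else 0)"

lemma wstep_up: "ivert D v \<Longrightarrow> ivert D w \<Longrightarrow> ustep v w \<Longrightarrow> c \<notin> D \<or> (fst c, snd c + 1) \<notin> D \<Longrightarrow>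
   th c w - th c v = wstep c v w - wstep (fst c, snd c + 1) v w"
  apply (cases v; cases w; cases c)
  apply (auto simp: wstep_def ustep_def ivert_def th_def)
  apply (smt (verit))+
  done

lemma wstep_far: "ivert D v \<Longrightarrow> wstep (b, y) v w = 0"
  using ivert_bounds[of v] by (auto simp: wstep_def)

context fixes p n assumes W: "cwalk D p n"
begin

lemma W_step: "k < n \<Longrightarrow> ustep (p k) (p (Suc k))" using W by (simp add: cwalk_def)
lemma W_iv: "k \<le> n \<Longrightarrow> ivert D (p k)" using W by (simp add: cwalk_def)
lemma W_closed: "p n = p 0" using W by (simp add: cwalk_def)

lemma telescope0: "(\<Sum>k<n. f (p (Suc k)) - f (p k)) = (0::int)"
  using sum_lessThan_telescope[of "\<lambda>k. f (p k)" n] W_closed by simp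

lemma wind_right: "c \<notin> D \<or> (fst c + 1, snd c) \<notin> D \<Longrightarrow> wind p n c = wind p n (fst c + 1, snd c)"
  unfolding wind_def by (rule sum.cong) (auto intro!: wstep_right W_step W_iv)

lemma wind_up: assumes "c \<notin> D \<or> (fst c, snd c + 1) \<notin> D" shows "wind p n c = wind p n (fst c, snd c + 1)"
proof -
  have "(\<Sum>k<n. th c (p (Suc k)) - th c (p k)) = (\<Sum>k<n. wstep c (p k) (p (Suc k)) - wstep (fst c, snd c + 1) (p k) (p (Suc k)))"
    by (rule sum.cong) (auto intro!: wstep_up W_step W_iv assms)
  then show ?thesis using telescope0[of "th c"] unfolding wind_def by (simp add: sum_subtractf)
qed

lemma wind_far: "wind p n (b, y) = 0"
  unfolding wind_def by (rule sum.neutral) (auto intro!: wstep_far W_iv)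

lemma wind_nbr: "c \<notin> D \<Longrightarrow> c' \<notin> D \<Longrightarrow> nbr c c' \<Longrightarrow> wind p n c = wind p n c'"
proof -
  assume c: "c \<notin> D" and c': "c' \<notin> D" and nb: "nbr c c'"
  obtain x y where cc: "c = (x,y)" by (cases c)
  from nbr_cases[OF nb] show ?thesis
  proof (elim disjE)
    assume "c' = (fst c + 1, snd c)" then show ?thesis using wind_right c cc by simp
  next
    assume "c' = (fst c - 1, snd c)" then show ?thesis using wind_right[of c'] c' cc by simp
  next
    assume "c' = (fst c, snd c + 1)" then show ?thesis using wind_up c cc by simp
  next
    assume "c' = (fst c, snd c - 1)" then show ?thesis using wind_up[of c'] c' cc by simp
  qed
qed

lemma wind_zero: assumes "c \<notin> D" shows "wind p n c = 0"
proof -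
  let ?R = "{(c, c'). c \<notin> D \<and> c' \<notin> D \<and> nbr c c'}"
  have h: "(b,0) \<notin> D" by (rule right_out) simp
  have "(c, (b,0)) \<in> ?R\<^sup>*" using Q[unfolded Qc_def, rule_format, OF assms h] .
  then have "wind p n c = wind p n (b,0)"
  proof (induction rule: converse_rtrancl_induct)
    case base then show ?case by simp
  next
    case (step y z) then show ?case using wind_nbr[of y z] by simp
  qed
  also have "\<dots> = 0" by (rule wind_far)
  finally show ?thesis .
qed

end

context fixes T assumes T: "dtiling D T"
begin

definition RR :: "int \<Rightarrow> int \<Rightarrow> int" where
  "RR x y = (\<Sum>i\<in>{a..<x}. fH T i y)"

lemma RH: "a \<le> x \<Longrightarrow> RR (x+1) y - RR x y = fH T x y"
proof -
  assume "a \<le> x"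
  then have "{a..<x+1} = insert x {a..<x}" by auto
  then show ?thesis unfolding RR_def by simp
qed

lemma RE: assumes ax: "a \<le> x" shows "RR x (y+1) - RR x y - fV T x y = - fV T a y - (\<Sum>i\<in>{a..<x}. curl T i y)"
proof -
  have H: "\<forall>y. RR (a + int m) (y+1) - RR (a + int m) y - fV T (a + int m) y = - fV T a y - (\<Sum>i\<in>{a..<a + int m}. curl T i y)" for m
  proof (induction m)
    case 0 then show ?case by (simp add: RR_def)
  next
    case (Suc m)
    show ?case
    proof
      fix y
      let ?x = "a + int m"
      have e: "a + int (Suc m) = ?x + 1" by simp
      have s: "{a..<?x+1} = insert ?x {a..<?x}" by auto
      have c: "fH T ?x y + fV T (?x+1) y - fH T ?x (y+1) - fV T ?x y = curl T ?x y"
        unfolding curl_def by (rule curl_eq)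
      show "RR (a + int (Suc m)) (y+1) - RR (a + int (Suc m)) y - fV T (a + int (Suc m)) y = - fV T a y - (\<Sum>i\<in>{a..<a + int (Suc m)}. curl T i y)"
        unfolding e s using RH[of ?x y] RH[of ?x "y+1"] spec[OF Suc.IH, of y] c by simp
    qed
  qed
  show ?thesis using spec[OF H[of "nat (x - a)"], of y] ax by simp
qed

definition kap :: "cell \<Rightarrow> int" where
  "kap c = (if fst c = a - 1 then fV T a (snd c) else curl T (fst c) (snd c))"

lemma box_sum: assumes xy: "(x,y) \<in> D"
  shows "(\<Sum>y'\<in>snd ` D. \<Sum>i\<in>{a-1..<b}. kap (i,y') * (if y' = y \<and> i < x then 1 else 0))
     = fV T a y + (\<Sum>i\<in>{a..<x}. curl T i y)"
proof -
  have xb: "x < b" "a < x" using hi[OF xy] lo[OF xy] by auto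
  have "(\<Sum>y'\<in>snd ` D. \<Sum>i\<in>{a-1..<b}. kap (i,y') * (if y' = y \<and> i < x then 1 else 0))
      = (\<Sum>y'\<in>snd ` D. if y' = y then (\<Sum>i\<in>{a-1..<b}. if i < x then kap (i,y) else 0) else 0)"
    by (rule sum.cong) (auto intro!: sum.cong)
  also have "\<dots> = (\<Sum>i\<in>{a-1..<b}. if i < x then kap (i,y) else 0)"
    using xy by (simp add: sum.delta[OF finite_imageI[OF finD]] image_iff) (metis snd_conv)
  also have "\<dots> = (\<Sum>i\<in>{i\<in>{a-1..<b}. i < x}. kap (i,y))"
    by (rule sum.inter_filter[symmetric]) simp
  also have "{i\<in>{a-1..<b}. i < x} = insert (a-1) {a..<x}" using xb by auto
  also have "(\<Sum>i\<in>insert (a-1) {a..<x}. kap (i,y)) = kap (a-1,y) + (\<Sum>i\<in>{a..<x}. kap (i,y))"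
    by simp
  also have "(\<Sum>i\<in>{a..<x}. kap (i,y)) = (\<Sum>i\<in>{a..<x}. curl T i y)"
    by (rule sum.cong) (auto simp: kap_def)
  finally show ?thesis by (simp add: kap_def)
qed

lemma fe_vc: assumes v: "ivert D v" and w: "ivert D w" and st: "ustep v w"
  shows "fe T v w = RR (fst w) (snd w) - RR (fst v) (snd v)
     + (\<Sum>y'\<in>snd ` D. \<Sum>i\<in>{a-1..<b}. kap (i,y') * wstep (i,y') v w)"
proof -
  obtain x y where vv: "v = (x,y)" by (cases v)
  have xb: "a \<le> x - 1" using ivert_bounds[OF v] vv by simp
  from st vv show ?thesis unfolding ustep_def
  proof (elim disjE)
    assume ww: "w = (fst v + 1, snd v)"
    have "wstep (i,y') v w = 0" for i y' using vv ww by (simp add: wstep_def)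
    then show ?thesis using RH[of x y] xb vv ww by (simp add: fe_def)
  next
    assume ww: "w = (fst v - 1, snd v)"
    have "wstep (i,y') v w = 0" for i y' using vv ww by (simp add: wstep_def)
    then show ?thesis using RH[of "x-1" y] xb vv ww by (simp add: fe_def)
  next
    assume ww: "w = (fst v, snd v + 1)"
    have ws: "wstep (i,y') (x,y) (x,y+1) = (if y' = y \<and> i < x then 1 else 0)" for i y' by (auto simp: wstep_def)
    have xyD: "(x,y) \<in> D" using v vv by (simp add: ivert_def)
    show ?thesis using RE[of x y] xb vv ww box_sum[OF xyD] by (simp add: fe_def ws)
  next
    assume ww: "w = (fst v, snd v - 1)"
    have ws: "wstep (i,y') (x,y) (x,y-1) = - (if y' = y - 1 \<and> i < x then 1 else 0)" for i y' by (auto simp: wstep_def)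
    have xyD: "(x,y-1) \<in> D" using w vv ww by (simp add: ivert_def)
    have e: "(\<Sum>y'\<in>snd ` D. \<Sum>i\<in>{a-1..<b}. kap (i,y') * wstep (i,y') (x,y) (x,y-1)) =
       - (\<Sum>y'\<in>snd ` D. \<Sum>i\<in>{a-1..<b}. kap (i,y') * (if y' = y - 1 \<and> i < x then 1 else 0))"
      unfolding ws by (simp add: sum_negf)
    show ?thesis using RE[of x "y-1"] xb vv ww box_sum[OF xyD] unfolding e by (simp add: fe_def vv ww e)
  qed
qed

lemma green: assumes W: "cwalk D p n" shows "(\<Sum>k<n. fe T (p k) (p (Suc k))) = 0"
proof -
  let ?Y = "snd ` D" let ?I = "{a-1..<b}"
  have "(\<Sum>k<n. fe T (p k) (p (Suc k))) = (\<Sum>k<n. RR (fst (p (Suc k))) (snd (p (Suc k))) - RR (fst (p k)) (snd (p k)))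
     + (\<Sum>k<n. \<Sum>y'\<in>?Y. \<Sum>i\<in>?I. kap (i,y') * wstep (i,y') (p k) (p (Suc k)))"
    unfolding sum.distrib[symmetric]
    by (rule sum.cong) (auto intro!: fe_vc W_step[OF W] W_iv[OF W])
  also have "(\<Sum>k<n. RR (fst (p (Suc k))) (snd (p (Suc k))) - RR (fst (p k)) (snd (p k))) = 0"
    using telescope0[OF W, of "\<lambda>v. RR (fst v) (snd v)"] by simp
  also have "(\<Sum>k<n. \<Sum>y'\<in>?Y. \<Sum>i\<in>?I. kap (i,y') * wstep (i,y') (p k) (p (Suc k)))
      = (\<Sum>y'\<in>?Y. \<Sum>i\<in>?I. kap (i,y') * wind p n (i,y'))"
    unfolding wind_def sum_distrib_left
    by (subst sum.swap) (simp add: sum.swap[of _ ?I])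
  also have "\<dots> = 0"
  proof (intro sum.neutral ballI)
    fix y' i assume "i \<in> ?I"
    show "kap (i,y') * wind p n (i,y') = 0"
    proof (cases "(i,y') \<in> D")
      case True
      then have "i \<noteq> a - 1" using lo[OF True] by auto
      then show ?thesis using cnt_in[OF T True] by (simp add: kap_def curl_def)
    next
      case False then show ?thesis using wind_zero[OF W] by simp
    qed
  qed
  finally show ?thesis by simp
qed

end


lemma isdom: "nbr p q \<Longrightarrow> \<exists>p' q'. nbr p' q' \<and> {p,q} = {p',q'}" by blast

lemma dtiling_replace:
  assumes T: "dtiling D T" and d: "d1 \<in> T" "d2 \<in> T" "d1 \<noteq> d2"
    and e: "\<exists>p q. nbr p q \<and> e1 = {p,q}" "\<exists>p q. nbr p q \<and> e2 = {p,q}" "e1 \<inter> e2 = {}" "e1 \<union> e2 = d1 \<union> d2"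
  shows "dtiling D (T - {d1,d2} \<union> {e1,e2})"
proof -
  have dom: "\<forall>d\<in>T. \<exists>p q. nbr p q \<and> d = {p,q}" and dis: "\<forall>d1\<in>T. \<forall>d2\<in>T. d1 \<noteq> d2 \<longrightarrow> d1 \<inter> d2 = {}"
    and un: "\<Union>T = D" using T by (auto simp: dtiling_def)
  have ne: "e1 \<noteq> {}" "e2 \<noteq> {}" using e by auto
  have o: "\<And>f. f \<in> T - {d1,d2} \<Longrightarrow> f \<inter> (d1 \<union> d2) = {}" using dis d by blast
  show ?thesis unfolding dtiling_def
  proof (intro conjI)
    show "\<forall>d\<in>T - {d1, d2} \<union> {e1, e2}. \<exists>p q. nbr p q \<and> d = {p, q}" using dom e by blast
    show "\<forall>A\<in>T - {d1, d2} \<union> {e1, e2}. \<forall>B\<in>T - {d1, d2} \<union> {e1, e2}. A \<noteq> B \<longrightarrow> A \<inter> B = {}"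
    proof (intro ballI impI)
      fix A B assume A: "A \<in> T - {d1, d2} \<union> {e1, e2}" and B: "B \<in> T - {d1, d2} \<union> {e1, e2}" and AB: "A \<noteq> B"
      have sub: "\<And>C. C \<in> {e1, e2} \<Longrightarrow> C \<subseteq> d1 \<union> d2" using e(4) by blast
      show "A \<inter> B = {}"
      proof (cases "A \<in> T - {d1,d2}")
        case True
        show ?thesis
        proof (cases "B \<in> T - {d1,d2}")
          case True then show ?thesis using dis AB \<open>A \<in> T - {d1,d2}\<close> by blast
        next
          case False then have "B \<subseteq> d1 \<union> d2" using B sub by blast
          then show ?thesis using o[OF \<open>A \<in> T - {d1,d2}\<close>] by blast
        qed
      next
        case False
        then have Ain: "A \<in> {e1, e2}" using A by blast
        show ?thesis
        proof (cases "B \<in> T - {d1,d2}")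
          case True then show ?thesis using o[OF True] sub[OF Ain] by blast
        next
          case False then have "B \<in> {e1, e2}" using B by blast
          then show ?thesis using Ain AB e(3) by blast
        qed
      qed
    qed
    show "\<Union>(T - {d1, d2} \<union> {e1, e2}) = D" using un e(4) d by blast
  qed
qed

lemma swap_back: "h1 \<in> T \<Longrightarrow> h2 \<in> T \<Longrightarrow> v1 \<notin> T \<Longrightarrow> v2 \<notin> T \<Longrightarrow> h1 \<noteq> v1 \<Longrightarrow> h1 \<noteq> v2
  \<Longrightarrow> h2 \<noteq> v1 \<Longrightarrow> h2 \<noteq> v2 \<Longrightarrow> T = (((T - {h1,h2}) \<union> {v1,v2}) - {v1,v2}) \<union> {h1,h2}"
  by blast

lemma dflip_sym: assumes T: "dtiling D T" and f: "dflip T T'" shows "dflip T' T"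
proof -
  have dis: "\<And>d1 d2. d1 \<in> T \<Longrightarrow> d2 \<in> T \<Longrightarrow> d1 \<noteq> d2 \<Longrightarrow> d1 \<inter> d2 = {}"
    using T unfolding dtiling_def by blast
  from f obtain x y where
    "({(x,y),(x+1,y)} \<in> T \<and> {(x,y+1),(x+1,y+1)} \<in> T \<and>
       T' = (T - {{(x,y),(x+1,y)}, {(x,y+1),(x+1,y+1)}}) \<union> {{(x,y),(x,y+1)}, {(x+1,y),(x+1,y+1)}}) \<or>
     ({(x,y),(x,y+1)} \<in> T \<and> {(x+1,y),(x+1,y+1)} \<in> T \<and>
       T' = (T - {{(x,y),(x,y+1)}, {(x+1,y),(x+1,y+1)}}) \<union> {{(x,y),(x+1,y)}, {(x,y+1),(x+1,y+1)}})"
    unfolding dflip_def by blast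
  then show ?thesis
  proof
    assume h: "{(x,y),(x+1,y)} \<in> T \<and> {(x,y+1),(x+1,y+1)} \<in> T \<and>
       T' = (T - {{(x,y),(x+1,y)}, {(x,y+1),(x+1,y+1)}}) \<union> {{(x,y),(x,y+1)}, {(x+1,y),(x+1,y+1)}}"
    have n1: "{(x,y),(x,y+1)} \<notin> T" using dis[of "{(x,y),(x+1,y)}" "{(x,y),(x,y+1)}"] h by (auto simp: doubleton_eq_iff)
    have n2: "{(x+1,y),(x+1,y+1)} \<notin> T" using dis[of "{(x,y),(x+1,y)}" "{(x+1,y),(x+1,y+1)}"] h by (auto simp: doubleton_eq_iff)
    have ne: "{(x,y),(x+1,y)} \<noteq> {(x,y),(x,y+1)}" "{(x,y),(x+1,y)} \<noteq> {(x+1,y),(x+1,y+1)}"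
      "{(x,y+1),(x+1,y+1)} \<noteq> {(x,y),(x,y+1)}" "{(x,y+1),(x+1,y+1)} \<noteq> {(x+1,y),(x+1,y+1)}"
      by (auto simp: doubleton_eq_iff)
    have eqn: "T = (T' - {{(x,y),(x,y+1)}, {(x+1,y),(x+1,y+1)}}) \<union> {{(x,y),(x+1,y)}, {(x,y+1),(x+1,y+1)}}"
      using h n1 n2 ne swap_back by metis
    have m: "{(x,y),(x,y+1)} \<in> T'" "{(x+1,y),(x+1,y+1)} \<in> T'" using h by auto
    show ?thesis unfolding dflip_def
      by (rule exI[of _ x], rule exI[of _ y], rule disjI2) (intro conjI m eqn)
  next
    assume h: "{(x,y),(x,y+1)} \<in> T \<and> {(x+1,y),(x+1,y+1)} \<in> T \<and>
       T' = (T - {{(x,y),(x,y+1)}, {(x+1,y),(x+1,y+1)}}) \<union> {{(x,y),(x+1,y)}, {(x,y+1),(x+1,y+1)}}"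
    have n1: "{(x,y),(x+1,y)} \<notin> T" using dis[of "{(x,y),(x,y+1)}" "{(x,y),(x+1,y)}"] h by (auto simp: doubleton_eq_iff)
    have n2: "{(x,y+1),(x+1,y+1)} \<notin> T" using dis[of "{(x,y),(x,y+1)}" "{(x,y+1),(x+1,y+1)}"] h by (auto simp: doubleton_eq_iff)
    have ne: "{(x,y),(x+1,y)} \<noteq> {(x,y),(x,y+1)}" "{(x,y),(x+1,y)} \<noteq> {(x+1,y),(x+1,y+1)}"
      "{(x,y+1),(x+1,y+1)} \<noteq> {(x,y),(x,y+1)}" "{(x,y+1),(x+1,y+1)} \<noteq> {(x+1,y),(x+1,y+1)}"
      by (auto simp: doubleton_eq_iff)
    have eqn: "T = (T' - {{(x,y),(x+1,y)}, {(x,y+1),(x+1,y+1)}}) \<union> {{(x,y),(x,y+1)}, {(x+1,y),(x+1,y+1)}}"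
      using h n1 n2 ne swap_back by metis
    have m: "{(x,y),(x+1,y)} \<in> T'" "{(x,y+1),(x+1,y+1)} \<in> T'" using h by auto
    show ?thesis unfolding dflip_def
      by (rule exI[of _ x], rule exI[of _ y], rule disjI1) (intro conjI m eqn)
  qed
qed

lemma gpot_swap: "gpot a T2 T1 v = - gpot a T1 T2 v"
  unfolding gpot_def by (simp add: sum_negf[symmetric])

definition mu :: "cell set set \<Rightarrow> cell set set \<Rightarrow> int" where
  "mu T1 T2 = (\<Sum>v\<in>{v. ivert D v}. \<bar>gpot a T1 T2 v\<bar>)"

lemma finV: "finite {v. ivert D v}"
proof -
  have "{v. ivert D v} \<subseteq> D" unfolding ivert_def by blast
  then show ?thesis using finD by (rule finite_subset)
qed

lemma mu_swap: "mu T2 T1 = mu T1 T2"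
  unfolding mu_def gpot_swap[of T2 T1] by simp

lemma mu_nonneg: "0 \<le> mu T1 T2"
  unfolding mu_def by (simp add: sum_nonneg)

context
  fixes T1 T2 assumes T1: "dtiling D T1" and T2: "dtiling D T2"
begin

lemma g_dvd4: "4 dvd gpot a T1 T2 v"
  unfolding gpot_def
proof (rule dvd_sum)
  fix i
  have "col i (snd v) = 1 \<or> col i (snd v) = -1" by (rule col_cases)
  then show "4 dvd fH T1 i (snd v) - fH T2 i (snd v)" unfolding fH_def by auto
qed

lemma no_up_cycle:
  assumes S: "finite S" "S \<noteq> {}" "\<And>v. v \<in> S \<Longrightarrow> ivert D v"
    and up: "\<And>v. v \<in> S \<Longrightarrow> \<exists>w\<in>S. ustep v w \<and> fe T1 v w > 0"
  shows False
proof -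
  obtain nx where nx: "\<And>v. v \<in> S \<Longrightarrow> nx v \<in> S \<and> ustep v (nx v) \<and> fe T1 v (nx v) > 0"
    using up by metis
  obtain v0 where v0: "v0 \<in> S" using S by blast
  define sq where "sq k = (nx ^^ k) v0" for k
  have sqS: "sq k \<in> S" for k by (induction k) (auto simp: sq_def v0 nx)
  have sqs: "sq (Suc k) = nx (sq k)" for k by (simp add: sq_def)
  have "\<not> inj_on sq {..card S}"
  proof
    assume "inj_on sq {..card S}"
    then have "card (sq ` {..card S}) = Suc (card S)" by (simp add: card_image)
    moreover have "card (sq ` {..card S}) \<le> card S" by (rule card_mono[OF S(1)]) (auto intro: sqS)
    ultimately show False by simp
  qed
  then obtain i j where ij: "i < j" "sq i = sq j"
    unfolding inj_on_def by (metis linorder_neqE_nat)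
  define p where "p k = sq (i + k)" for k
  define n where "n = j - i"
  have W: "cwalk D p n" unfolding cwalk_def
  proof (intro conjI allI impI)
    show "p n = p 0" using ij by (simp add: p_def n_def)
    fix k
    show "ustep (p k) (p (Suc k))" using nx[OF sqS[of "i+k"]] by (simp add: p_def sqs)
    show "ivert D (p k)" using S(3)[OF sqS] by (simp add: p_def)
  qed
  have "(\<Sum>k<n. fe T1 (p k) (p (Suc k))) = 0" by (rule green[OF T1 W])
  moreover have "0 < (\<Sum>k<n. fe T1 (p k) (p (Suc k)))"
  proof (rule sum_pos)
    have "0 \<in> {..<n}" using ij by (simp add: n_def)
    then show "{..<n} \<noteq> {}" by blast
    fix k show "0 < fe T1 (p k) (p (Suc k))" using nx[OF sqS[of "i+k"]] by (simp add: p_def sqs)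
  qed simp
  ultimately show False by simp
qed

lemma fH_T1_cases: "fH T x y = col x y \<or> fH T x y = -3 * col x y"
  unfolding fH_def by auto

lemma key:
  assumes pos: "\<exists>v. gpot a T1 T2 v > 0"
  shows "\<exists>T1'. dtiling D T1' \<and> dflip T1 T1' \<and> mu T1' T2 < mu T1 T2"
proof -
  let ?V = "{v. ivert D v}"
  let ?g = "gpot a T1 T2"
  define M where "M = Max (?g ` ?V)"
  from pos obtain v1 where v1: "?g v1 > 0" by blast
  then have v1V: "v1 \<in> ?V" using gpot_nonint[OF T1 T2, of v1] by (cases "ivert D v1") auto
  have Mge: "?g w \<le> M" if "w \<in> ?V" for w unfolding M_def using finV that by simp
  have Mpos: "M > 0" using Mge[OF v1V] v1 by simp
  have Mall: "?g w \<le> M" for w using Mge gpot_nonint[OF T1 T2, of w] Mpos by (cases "ivert D w") auto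
  have Vne: "?V \<noteq> {}" using v1V by blast
  have Min: "M \<in> ?g ` ?V" unfolding M_def using finV Vne by (intro Max_in) simp_all
  define S where "S = {v. ivert D v \<and> ?g v = M}"
  have Sfin: "finite S" using finV by (rule finite_subset[rotated]) (auto simp: S_def)
  have Sne: "S \<noteq> {}" using Min by (auto simp: S_def)
  obtain v where vS: "v \<in> S" and vsink: "\<And>w. w \<in> S \<Longrightarrow> ustep v w \<Longrightarrow> fe T1 v w \<le> 0"
    using no_up_cycle[OF Sfin Sne] by (force simp: S_def)
  have neg: "fe T1 v w < 0" if st: "ustep v w" for w
  proof (rule ccontr)
    assume "\<not> fe T1 v w < 0"
    obtain s where s: "s = 1 \<or> s = -1" "\<And>T. fe T v w = s \<or> fe T v w = -3 * s" using fe_sign[OF st] by blast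
    have pot: "fe T1 v w - fe T2 v w = ?g w - ?g v" by (rule fe_pot[OF T1 T2 st])
    have gv: "?g v = M" using vS by (simp add: S_def)
    have "fe T1 v w > 0" using s(1) s(2)[of T1] \<open>\<not> fe T1 v w < 0\<close> by auto
    then have eq: "fe T2 v w = fe T1 v w" using s(1) s(2)[of T1] s(2)[of T2] pot gv Mall[of w] by auto
    then have "?g w = M" using pot gv by simp
    then have "ivert D w" using gpot_nonint[OF T1 T2, of w] Mpos by auto
    then have "w \<in> S" using \<open>?g w = M\<close> by (simp add: S_def)
    then show False using vsink[OF _ st] \<open>fe T1 v w > 0\<close> by simp
  qed
  obtain x y where vv: "v = (x,y)" by (cases v)
  have ivv: "ivert D (x,y)" using vS vv by (simp add: S_def)
  have gvM: "?g (x,y) = M" using vS vv by (simp add: S_def)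
  have R: "fH T1 x y < 0" using neg[of "(x+1,y)"] vv by (simp add: ustep_def fe_def)
  have L: "fH T1 (x-1) y > 0" using neg[of "(x-1,y)"] vv by (simp add: ustep_def fe_def)
  have U: "fV T1 x y < 0" using neg[of "(x,y+1)"] vv by (simp add: ustep_def fe_def)
  have Dn: "fV T1 x (y-1) > 0" using neg[of "(x,y-1)"] vv by (simp add: ustep_def fe_def)
  have dis: "\<And>d1 d2. d1 \<in> T1 \<Longrightarrow> d2 \<in> T1 \<Longrightarrow> d1 \<noteq> d2 \<Longrightarrow> d1 \<inter> d2 = {}"
    using T1 unfolding dtiling_def by blast
  have ax: "a \<le> x - 1" using ivert_bounds[OF ivv] by simp
  have "\<exists>T1'. dtiling D T1' \<and> dflip T1 T1' \<and>
          (\<forall>i y'. fH T1' i y' - fH T1 i y' = (if y' = y \<and> i = x - 1 then -4 else 0) + (if y' = y \<and> i = x then 4 else 0))"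
  proof (cases "col x y = 1")
    case True
    have cl: "col (x-1) y = -1" using True by simp
    have m1: "{(x,y-1),(x,y)} \<in> T1" using R True unfolding fH_def by (auto split: if_splits simp: insert_commute)
    have m2: "{(x-1,y-1),(x-1,y)} \<in> T1" using L cl unfolding fH_def by (auto split: if_splits simp: insert_commute)
    define T1' where "T1' = (T1 - {{(x-1,y-1),(x-1,y)}, {(x,y-1),(x,y)}}) \<union> {{(x-1,y-1),(x,y-1)}, {(x-1,y),(x,y)}}"
    have tl: "dtiling D T1'" unfolding T1'_def
      by (rule dtiling_replace[OF T1 m2 m1]; (rule isdom, simp add: nbr_def)?) (auto simp: doubleton_eq_iff)
    have fl: "dflip T1 T1'" unfolding dflip_def
      by (rule exI[of _ "x-1"], rule exI[of _ "y-1"]) (use m1 m2 in \<open>simp add: T1'_def\<close>)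
    have mem: "{(i,y'),(i,y'-1)} \<in> T1' \<longleftrightarrow> {(i,y'),(i,y'-1)} \<in> T1 \<and> \<not> (y' = y \<and> (i = x - 1 \<or> i = x))" for i y'
      unfolding T1'_def by (auto simp: doubleton_eq_iff)
    have "fH T1' i y' - fH T1 i y' = (if y' = y \<and> i = x - 1 then -4 else 0) + (if y' = y \<and> i = x then 4 else 0)" for i y'
      using m1 m2 True cl unfolding fH_def mem by (auto simp: insert_commute)
    then show ?thesis using tl fl by blast
  next
    case False
    then have cxy: "col x y = -1" using col_cases[of x y] by simp
    have cl: "col (x-1) y = 1" using cxy by simp
    have cd: "col (x-1) (y-1) = -1" using cxy by simp
    have m1: "{(x-1,y),(x,y)} \<in> T1" using U cl unfolding fV_def by (auto split: if_splits)
    have m2: "{(x-1,y-1),(x,y-1)} \<in> T1" using Dn cd unfolding fV_def by (auto split: if_splits)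
    have n1: "{(x-1,y-1),(x-1,y)} \<notin> T1" using dis[OF m1, of "{(x-1,y-1),(x-1,y)}"] by (auto simp: doubleton_eq_iff)
    have n2: "{(x,y-1),(x,y)} \<notin> T1" using dis[OF m1, of "{(x,y-1),(x,y)}"] by (auto simp: doubleton_eq_iff)
    define T1' where "T1' = (T1 - {{(x-1,y-1),(x,y-1)}, {(x-1,y),(x,y)}}) \<union> {{(x-1,y-1),(x-1,y)}, {(x,y-1),(x,y)}}"
    have tl: "dtiling D T1'" unfolding T1'_def
      by (rule dtiling_replace[OF T1 m2 m1]; (rule isdom, simp add: nbr_def)?) (auto simp: doubleton_eq_iff)
    have fl: "dflip T1 T1'" unfolding dflip_def
      by (rule exI[of _ "x-1"], rule exI[of _ "y-1"]) (use m1 m2 in \<open>simp add: T1'_def\<close>)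
    have mem: "{(i,y'),(i,y'-1)} \<in> T1' \<longleftrightarrow> {(i,y'),(i,y'-1)} \<in> T1 \<or> (y' = y \<and> (i = x - 1 \<or> i = x))" for i y'
      unfolding T1'_def by (auto simp: doubleton_eq_iff)
    have "fH T1' i y' - fH T1 i y' = (if y' = y \<and> i = x - 1 then -4 else 0) + (if y' = y \<and> i = x then 4 else 0)" for i y'
      using n1 n2 cxy cl unfolding fH_def mem by (auto simp: insert_commute)
    then show ?thesis using tl fl by blast
  qed
  then obtain T1' where tl: "dtiling D T1'" and fl: "dflip T1 T1'"
    and dl: "\<And>i y'. fH T1' i y' - fH T1 i y' = (if y' = y \<and> i = x - 1 then -4 else 0) + (if y' = y \<and> i = x then 4 else 0)"
    by blast
  have gnew: "gpot a T1' T2 w = ?g w - (if w = (x,y) then 4 else 0)" for w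
  proof -
    obtain x' y' where ww: "w = (x',y')" by (cases w)
    have "gpot a T1' T2 w - ?g w = (\<Sum>i\<in>{a..<x'}. fH T1' i y' - fH T1 i y')"
      unfolding gpot_def ww by (simp add: sum_subtractf[symmetric])
    also have "\<dots> = (\<Sum>i\<in>{a..<x'}. (if y' = y \<and> i = x - 1 then -4 else 0) + (if y' = y \<and> i = x then 4 else 0))"
      using dl by simp
    also have "\<dots> = (if y' = y \<and> x - 1 \<in> {a..<x'} then -4 else 0) + (if y' = y \<and> x \<in> {a..<x'} then 4 else 0)"
    proof (cases "y' = y")
      case True
      have "(\<Sum>i\<in>{a..<x'}. (if y' = y \<and> i = x - 1 then -4 else 0) + (if y' = y \<and> i = x then 4 else 0))
         = (\<Sum>i\<in>{a..<x'}. (if i = x - 1 then -4 else 0::int)) + (\<Sum>i\<in>{a..<x'}. (if i = x then 4 else 0::int))"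
        using True by (simp add: sum.distrib)
      also have "\<dots> = (if x - 1 \<in> {a..<x'} then -4 else 0::int) + (if x \<in> {a..<x'} then 4 else 0)"
        by (simp only: sum.delta finite_atLeastLessThan_int)
      finally show ?thesis using True by simp
    qed simp
    also have "\<dots> = - (if w = (x,y) then 4 else 0)" using ax ww by auto
    finally show ?thesis by simp
  qed
  have "mu T1' T2 = (\<Sum>w\<in>?V. \<bar>?g w - (if w = (x,y) then 4 else 0)\<bar>)"
    unfolding mu_def gnew ..
  also have "\<dots> = \<bar>?g (x,y) - 4\<bar> + (\<Sum>w\<in>?V - {(x,y)}. \<bar>?g w\<bar>)"
    using ivv finV by (simp add: sum.remove)
  also have "\<bar>?g (x,y) - 4\<bar> = ?g (x,y) - 4"
    using gvM Mpos g_dvd4[of "(x,y)"] by (auto simp: dvd_def)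
  also have "?g (x,y) - 4 + (\<Sum>w\<in>?V - {(x,y)}. \<bar>?g w\<bar>) = mu T1 T2 - 4"
    unfolding mu_def using ivv finV gvM Mpos by (simp add: sum.remove)
  finally show ?thesis using tl fl by auto
qed

lemma eq_if_g0: assumes "\<And>v. gpot a T1 T2 v = 0" shows "T1 = T2"
proof -
  have h: "({(x,y),(x,y-1)} \<in> T1) = ({(x,y),(x,y-1)} \<in> T2)" for x y
  proof -
    have "fH T1 x y = fH T2 x y" using gH[OF T1 T2, of x y] assms by simp
    then show ?thesis using col_cases[of x y] unfolding fH_def by (auto split: if_splits)
  qed
  have v: "({(x-1,y),(x,y)} \<in> T1) = ({(x-1,y),(x,y)} \<in> T2)" for x y
  proof -
    have "fV T1 x y = fV T2 x y" using gV[OF T1 T2, of x y] assms by simp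
    then show ?thesis using col_cases[of "x-1" y] unfolding fV_def by (auto split: if_splits)
  qed
  have dd: "nbr p q \<Longrightarrow> ({p,q} \<in> T1) = ({p,q} \<in> T2)" for p q
  proof -
    assume "nbr p q"
    obtain x y where pp: "p = (x,y)" by (cases p)
    from nbr_cases[OF \<open>nbr p q\<close>] pp show ?thesis
    proof (elim disjE)
      assume "q = (fst p + 1, snd p)" then show ?thesis using v[of "x+1" y] pp by simp
    next
      assume "q = (fst p - 1, snd p)" then show ?thesis using v[of x y] pp by (simp add: insert_commute)
    next
      assume "q = (fst p, snd p + 1)" then show ?thesis using h[of x "y+1"] pp by (simp add: insert_commute)
    next
      assume "q = (fst p, snd p - 1)" then show ?thesis using h[of x y] pp by simp
    qed
  qed
  have d1: "\<forall>d\<in>T1. \<exists>p q. nbr p q \<and> d = {p,q}" using T1 by (simp add: dtiling_def)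
  have d2: "\<forall>d\<in>T2. \<exists>p q. nbr p q \<and> d = {p,q}" using T2 by (simp add: dtiling_def)
  show ?thesis
  proof (rule set_eqI, rule iffI)
    fix d assume d: "d \<in> T1"
    then obtain p q where pq: "nbr p q" "d = {p,q}" using d1 by blast
    then show "d \<in> T2" using dd[OF pq(1)] d by simp
  next
    fix d assume d: "d \<in> T2"
    then obtain p q where pq: "nbr p q" "d = {p,q}" using d2 by blast
    then show "d \<in> T1" using dd[OF pq(1)] d by simp
  qed
qed

end

theorem thurston: "dtiling D T1 \<Longrightarrow> dtiling D T2 \<Longrightarrow> dflip\<^sup>*\<^sup>* T1 T2"
proof (induction "nat (mu T1 T2)" arbitrary: T1 T2 rule: less_induct)
  case less
  note T1 = less.prems(1) and T2 = less.prems(2)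
  show ?case
  proof (cases "T1 = T2")
    case True then show ?thesis by simp
  next
    case False
    then obtain v where v: "gpot a T1 T2 v \<noteq> 0" using eq_if_g0[OF T1 T2] by blast
    show ?thesis
    proof (cases "gpot a T1 T2 v > 0")
      case True
      then obtain T1' where t: "dtiling D T1'" "dflip T1 T1'" "mu T1' T2 < mu T1 T2"
        using key[OF T1 T2] by blast
      have "nat (mu T1' T2) < nat (mu T1 T2)" using t(3) mu_nonneg[of T1' T2] by simp
      then have "dflip\<^sup>*\<^sup>* T1' T2" using less.hyps t(1) T2 by blast
      then show ?thesis using t(2) by (simp add: converse_rtranclp_into_rtranclp)
    next
      case False
      then have "gpot a T2 T1 v > 0" using v gpot_swap[of T2 T1 v] by simp
      then obtain T2' where t: "dtiling D T2'" "dflip T2 T2'" "mu T2' T1 < mu T2 T1"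
        using key[OF T2 T1] by blast
      have "nat (mu T1 T2') < nat (mu T1 T2)" using t(3) mu_nonneg[of T2' T1] mu_swap[of T1 T2'] mu_swap[of T1 T2] by simp
      then have "dflip\<^sup>*\<^sup>* T1 T2'" using less.hyps t(1) T1 by blast
      moreover have "dflip T2' T2" by (rule dflip_sym[OF T2 t(2)])
      ultimately show ?thesis by (simp add: rtranclp.rtrancl_into_rtrancl)
    qed
  qed
qed
end



lemma unit_square_eq: "unit_square p = {real_of_int (fst p)..real_of_int (fst p)+1} \<times> {real_of_int (snd p)..real_of_int (snd p)+1}"
  by (auto simp: unit_square_def)

lemma closed_unit_square: "closed (unit_square p)"
  unfolding unit_square_eq by (intro closed_Times closed_atLeastAtMost)

lemma convex_unit_square: "convex (unit_square p)"
  unfolding unit_square_eq by (intro convex_Times convex_real_interval)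

lemma compact_S: "finite D \<Longrightarrow> compact (squares_union D)"
  unfolding squares_union_def unit_square_eq by (intro compact_UN) (auto intro!: compact_Times)

lemma lpc_S: assumes fin: "finite D" shows "locally path_connected (squares_union D)"
proof (rule locally_path_connected_1)
  let ?S = "squares_union D"
  fix v x assume ov: "openin (top_of_set ?S) v" and xv: "x \<in> v"
  obtain e where e: "e > 0" "\<And>x'. x' \<in> ?S \<Longrightarrow> dist x' x < e \<Longrightarrow> x' \<in> v"
    using ov xv unfolding openin_euclidean_subtopology_iff by blast
  have vS: "v \<subseteq> ?S" using openin_subset[OF ov] by simp
  let ?K = "(\<Union>p\<in>{p\<in>D. x \<notin> unit_square p}. unit_square p)"
  have cK: "closed ?K" using fin by (intro closed_UN) (auto intro: closed_unit_square)
  have xK: "x \<notin> ?K" by blast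
  have oK: "open (- ?K)" using cK by (simp only: open_Compl)
  have xK': "x \<in> - ?K" using xK by simp
  obtain r where r: "r > 0" "ball x r \<subseteq> - ?K"
    using open_contains_ball_eq[OF oK] xK' by blast
  define d where "d = min e r"
  have d: "d > 0" using e r by (simp add: d_def)
  define u where "u = ?S \<inter> ball x d"
  show "\<exists>u. openin (top_of_set ?S) u \<and> path_connected u \<and> x \<in> u \<and> u \<subseteq> v"
  proof (intro exI conjI)
    show "openin (top_of_set ?S) u" unfolding u_def by (rule openin_open_Int) simp
    show "x \<in> u" using xv vS d by (auto simp: u_def)
    show "u \<subseteq> v" using e by (auto simp: u_def d_def dist_commute)
    have ueq: "u = (\<Union>p\<in>{p\<in>D. x \<in> unit_square p}. ball x d \<inter> unit_square p)"
    proof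
      show "u \<subseteq> (\<Union>p\<in>{p\<in>D. x \<in> unit_square p}. ball x d \<inter> unit_square p)"
      proof
        fix y assume y: "y \<in> u"
        then obtain p where p: "p \<in> D" "y \<in> unit_square p" by (auto simp: u_def squares_union_def)
        have "y \<in> ball x r" using y by (auto simp: u_def d_def)
        then have "y \<notin> ?K" using r by blast
        then have "x \<in> unit_square p" using p by blast
        moreover have "y \<in> ball x d" using y by (simp add: u_def)
        ultimately show "y \<in> (\<Union>p\<in>{p\<in>D. x \<in> unit_square p}. ball x d \<inter> unit_square p)"
          using p by blast
      qed
      show "(\<Union>p\<in>{p\<in>D. x \<in> unit_square p}. ball x d \<inter> unit_square p) \<subseteq> u"
        by (auto simp: u_def squares_union_def)
    qed
    show "path_connected u" unfolding ueq
      by (rule path_connected_UNION[where z=x])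
         (auto intro!: convex_imp_path_connected convex_Int convex_unit_square simp: d)
  qed
qed

definition toC :: "real \<times> real \<Rightarrow> complex" where "toC p = Complex (fst p) (snd p)"
definition ofC :: "complex \<Rightarrow> real \<times> real" where "ofC z = (Re z, Im z)"

lemma cont_toC: "continuous_on A toC" unfolding toC_def by (intro continuous_intros)
lemma cont_ofC: "continuous_on A ofC" unfolding ofC_def by (intro continuous_intros)
lemma ofC_toC[simp]: "ofC (toC p) = p" by (simp add: ofC_def toC_def)
lemma toC_ofC[simp]: "toC (ofC z) = z" by (simp add: ofC_def toC_def)

lemma compl_connected:
  assumes fin: "finite D" and sc: "simply_connected (squares_union D)"
  shows "connected (- squares_union D)"
proof -
  let ?S = "squares_union D"
  have B: "Borsukian ?S" by (rule simply_connected_imp_Borsukian[OF sc lpc_S[OF fin]])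
  have hom: "?S homeomorphic (toC ` ?S)"
    unfolding homeomorphic_def homeomorphism_def
    by (rule exI[of _ toC], rule exI[of _ ofC])
       (auto intro: cont_toC cont_ofC simp: image_image)
  have B': "Borsukian (toC ` ?S)" by (rule homeomorphic_Borsukian[OF B hom])
  have cpt: "compact (toC ` ?S)" by (rule compact_continuous_image[OF cont_toC compact_S[OF fin]])
  have con: "connected (- (toC ` ?S))" using Borsukian_separation_compact[OF cpt] B' by simp
  have eq: "- ?S = ofC ` (- (toC ` ?S))"
  proof
    show "- ?S \<subseteq> ofC ` (- (toC ` ?S))"
    proof
      fix x assume "x \<in> - ?S"
      then have "toC x \<in> - (toC ` ?S)" by (auto dest: arg_cong[of _ _ ofC])
      then show "x \<in> ofC ` (- (toC ` ?S))" by (rule image_eqI[rotated]) simp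
    qed
    show "ofC ` (- (toC ` ?S)) \<subseteq> - ?S" by (auto simp: image_iff) (metis toC_ofC)
  qed
  show ?thesis unfolding eq by (rule connected_continuous_image[OF cont_ofC con])
qed

definition cellof :: "real \<times> real \<Rightarrow> cell" where
  "cellof w = (\<lfloor>fst w\<rfloor>, \<lfloor>snd w\<rfloor>)"

lemma in_own: "w \<in> unit_square (cellof w)"
  by (cases w) (auto simp: unit_square_def cellof_def)

lemma in_S: "p \<in> D \<Longrightarrow> w \<in> unit_square p \<Longrightarrow> w \<in> squares_union D"
  by (auto simp: squares_union_def)

definition ctr :: "cell \<Rightarrow> real \<times> real" where
  "ctr c = (real_of_int (fst c) + 1/2, real_of_int (snd c) + 1/2)"

lemma cellof_ctr: "cellof (ctr c) = c"
proof -
  have "\<lfloor>real_of_int k + 1/2\<rfloor> = k" for k by linarith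
  then show ?thesis by (simp add: cellof_def ctr_def)
qed

lemma ctr_in: "ctr c \<in> unit_square p \<Longrightarrow> p = c"
proof -
  assume h: "ctr c \<in> unit_square p"
  obtain x y where c: "c = (x,y)" by (cases c)
  obtain x' y' where p: "p = (x',y')" by (cases p)
  from h have "real_of_int x' \<le> real_of_int x + 1/2" "real_of_int x + 1/2 \<le> real_of_int x' + 1"
    "real_of_int y' \<le> real_of_int y + 1/2" "real_of_int y + 1/2 \<le> real_of_int y' + 1"
    by (auto simp: unit_square_def ctr_def c p)
  then have "x' \<le> x" "x \<le> x'" "y' \<le> y" "y \<le> y'" by linarith+
  then show ?thesis using c p by simp
qed

lemma ctr_notS: "c \<notin> D \<Longrightarrow> ctr c \<notin> squares_union D"
  unfolding squares_union_def using ctr_in by blast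

definition ek :: "real \<Rightarrow> real" where
  "ek t = (if t = of_int \<lfloor>t\<rfloor> then 1 else min (t - of_int \<lfloor>t\<rfloor>) (of_int \<lfloor>t\<rfloor> + 1 - t))"

lemma ek_pos: "ek t > 0"
  unfolding ek_def by (auto simp: of_int_floor_le order.strict_iff_order) linarith

lemma ek_coord: "\<bar>s - t\<bar> < ek t \<Longrightarrow> \<lfloor>s\<rfloor> = \<lfloor>t\<rfloor> \<or> (\<lfloor>s\<rfloor> = \<lfloor>t\<rfloor> - 1 \<and> t = of_int \<lfloor>t\<rfloor>)"
proof -
  assume h: "\<bar>s - t\<bar> < ek t"
  show ?thesis
  proof (cases "t = of_int \<lfloor>t\<rfloor>")
    case True
    then have "t - 1 < s" "s < t + 1" using h by (auto simp: ek_def)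
    then have "\<lfloor>s\<rfloor> = \<lfloor>t\<rfloor> \<or> \<lfloor>s\<rfloor> = \<lfloor>t\<rfloor> - 1" using True by linarith
    then show ?thesis using True by auto
  next
    case False
    then have "of_int \<lfloor>t\<rfloor> < s" "s < of_int \<lfloor>t\<rfloor> + 1" using h by (auto simp: ek_def)
    then have "\<lfloor>s\<rfloor> = \<lfloor>t\<rfloor>" by linarith
    then show ?thesis by simp
  qed
qed

definition Rel :: "cell set \<Rightarrow> (cell \<times> cell) set" where
  "Rel D = {(c, c'). c \<notin> D \<and> c' \<notin> D \<and> nbr c c'}"

lemma Rel_sym: "(c, c') \<in> (Rel D)\<^sup>* \<Longrightarrow> (c', c) \<in> (Rel D)\<^sup>*"
proof (induction rule: rtrancl_induct)
  case base then show ?case by simp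
next
  case (step y z)
  then have "(z, y) \<in> Rel D" by (auto simp: Rel_def nbr_def abs_minus_commute)
  then show ?case using step.IH by (rule converse_rtrancl_into_rtrancl)
qed

lemma step_or_eq: "c \<notin> D \<Longrightarrow> c' \<notin> D \<Longrightarrow> c = c' \<or> nbr c c' \<Longrightarrow> (c, c') \<in> (Rel D)\<^sup>*"
  by (auto simp: Rel_def)

lemma local_cells:
  assumes z: "z \<notin> squares_union D"
  shows "\<exists>e>0. \<forall>w. dist w z < e \<longrightarrow> (cellof z, cellof w) \<in> (Rel D)\<^sup>*"
proof -
  obtain a b where zz: "z = (a,b)" by (cases z)
  define e where "e = min (ek a) (ek b)"
  have e: "e > 0" using ek_pos by (simp add: e_def)
  have cellin: "z \<in> unit_square (i', j')" if "\<lfloor>s\<rfloor> = \<lfloor>a\<rfloor> \<or> (\<lfloor>s\<rfloor> = \<lfloor>a\<rfloor> - 1 \<and> a = of_int \<lfloor>a\<rfloor>)" "i' = \<lfloor>s\<rfloor>"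
     "\<lfloor>t\<rfloor> = \<lfloor>b\<rfloor> \<or> (\<lfloor>t\<rfloor> = \<lfloor>b\<rfloor> - 1 \<and> b = of_int \<lfloor>b\<rfloor>)" "j' = \<lfloor>t\<rfloor>" for s t i' j'
    using that unfolding unit_square_def zz by (auto; linarith)
  have notD: "c \<notin> D" if "z \<in> unit_square c" for c using z that in_S by blast
  show ?thesis
  proof (intro exI[of _ e] conjI allI impI e)
    fix w assume dw: "dist w z < e"
    obtain s t where ww: "w = (s,t)" by (cases w)
    have "\<bar>s - a\<bar> < ek a" using dist_fst_le[of w z] dw ww zz by (simp add: e_def dist_real_def)
    then have hs: "\<lfloor>s\<rfloor> = \<lfloor>a\<rfloor> \<or> (\<lfloor>s\<rfloor> = \<lfloor>a\<rfloor> - 1 \<and> a = of_int \<lfloor>a\<rfloor>)" by (rule ek_coord)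
    have "\<bar>t - b\<bar> < ek b" using dist_snd_le[of w z] dw ww zz by (simp add: e_def dist_real_def)
    then have ht: "\<lfloor>t\<rfloor> = \<lfloor>b\<rfloor> \<or> (\<lfloor>t\<rfloor> = \<lfloor>b\<rfloor> - 1 \<and> b = of_int \<lfloor>b\<rfloor>)" by (rule ek_coord)
    have b0: "\<lfloor>b\<rfloor> = \<lfloor>b\<rfloor> \<or> (\<lfloor>b\<rfloor> = \<lfloor>b\<rfloor> - 1 \<and> b = of_int \<lfloor>b\<rfloor>)" by simp
    have a0: "\<lfloor>a\<rfloor> = \<lfloor>a\<rfloor> \<or> (\<lfloor>a\<rfloor> = \<lfloor>a\<rfloor> - 1 \<and> a = of_int \<lfloor>a\<rfloor>)" by simp
    have m1: "(\<lfloor>a\<rfloor>, \<lfloor>b\<rfloor>) \<notin> D" by (rule notD, rule cellin[OF a0 refl b0 refl])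
    have m2: "(\<lfloor>s\<rfloor>, \<lfloor>b\<rfloor>) \<notin> D" by (rule notD, rule cellin[OF hs refl b0 refl])
    have m3: "(\<lfloor>s\<rfloor>, \<lfloor>t\<rfloor>) \<notin> D" by (rule notD, rule cellin[OF hs refl ht refl])
    have "(\<lfloor>a\<rfloor>, \<lfloor>b\<rfloor>) = (\<lfloor>s\<rfloor>, \<lfloor>b\<rfloor>) \<or> nbr (\<lfloor>a\<rfloor>, \<lfloor>b\<rfloor>) (\<lfloor>s\<rfloor>, \<lfloor>b\<rfloor>)"
      using hs by (auto simp: nbr_def)
    then have r1: "((\<lfloor>a\<rfloor>, \<lfloor>b\<rfloor>), (\<lfloor>s\<rfloor>, \<lfloor>b\<rfloor>)) \<in> (Rel D)\<^sup>*" by (rule step_or_eq[OF m1 m2])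
    have "(\<lfloor>s\<rfloor>, \<lfloor>b\<rfloor>) = (\<lfloor>s\<rfloor>, \<lfloor>t\<rfloor>) \<or> nbr (\<lfloor>s\<rfloor>, \<lfloor>b\<rfloor>) (\<lfloor>s\<rfloor>, \<lfloor>t\<rfloor>)"
      using ht by (auto simp: nbr_def)
    then have r2: "((\<lfloor>s\<rfloor>, \<lfloor>b\<rfloor>), (\<lfloor>s\<rfloor>, \<lfloor>t\<rfloor>)) \<in> (Rel D)\<^sup>*" by (rule step_or_eq[OF m2 m3])
    show "(cellof z, cellof w) \<in> (Rel D)\<^sup>*" using r1 r2 zz ww by (simp add: cellof_def)
  qed
qed

theorem disk_Qc: assumes "quadriculated_disk D" shows "Qc D"
proof -
  let ?S = "squares_union D"
  have fin: "finite D" and sc: "simply_connected ?S" using assms by (auto simp: quadriculated_disk_def)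
  have con: "connected (- ?S)" by (rule compl_connected[OF fin sc])
  show ?thesis unfolding Qc_def
  proof (intro allI impI, rule ccontr)
    fix q r assume q: "q \<notin> D" and r: "r \<notin> D" and nr: "(q, r) \<notin> {(c, c'). c \<notin> D \<and> c' \<notin> D \<and> nbr c c'}\<^sup>*"
    then have nr': "(q, r) \<notin> (Rel D)\<^sup>*" by (simp add: Rel_def)
    define A where "A = {z. z \<notin> ?S \<and> (q, cellof z) \<in> (Rel D)\<^sup>*}"
    have op: "openin (top_of_set (- ?S)) A"
      unfolding openin_euclidean_subtopology_iff
    proof (intro conjI ballI)
      show "A \<subseteq> - ?S" by (auto simp: A_def)
      fix z assume zA: "z \<in> A"
      obtain e where e: "e > 0" "\<And>w. dist w z < e \<Longrightarrow> (cellof z, cellof w) \<in> (Rel D)\<^sup>*"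
        using local_cells[of z D] zA by (auto simp: A_def)
      have qz: "(q, cellof z) \<in> (Rel D)\<^sup>*" using zA by (simp add: A_def)
      show "\<exists>e>0. \<forall>x'\<in>- ?S. dist x' z < e \<longrightarrow> x' \<in> A"
      proof (intro exI[of _ e] conjI ballI impI e(1))
        fix x' assume "x' \<in> - ?S" "dist x' z < e"
        then show "x' \<in> A" using rtrancl_trans[OF qz e(2)] by (simp add: A_def)
      qed
    qed
    have op2: "openin (top_of_set (- ?S)) (- ?S - A)"
      unfolding openin_euclidean_subtopology_iff
    proof (intro conjI ballI)
      show "- ?S - A \<subseteq> - ?S" by auto
      fix z assume zA: "z \<in> - ?S - A"
      obtain e where e: "e > 0" "\<And>w. dist w z < e \<Longrightarrow> (cellof z, cellof w) \<in> (Rel D)\<^sup>*"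
        using local_cells[of z D] zA by auto
      show "\<exists>e>0. \<forall>x'\<in>- ?S. dist x' z < e \<longrightarrow> x' \<in> - ?S - A"
      proof (intro exI[of _ e] conjI ballI impI e(1))
        fix x' assume x': "x' \<in> - ?S" "dist x' z < e"
        have "x' \<notin> A"
        proof
          assume "x' \<in> A"
          then have "(q, cellof x') \<in> (Rel D)\<^sup>*" by (simp add: A_def)
          moreover have "(cellof x', cellof z) \<in> (Rel D)\<^sup>*" using e(2)[OF x'(2)] by (rule Rel_sym)
          ultimately have "(q, cellof z) \<in> (Rel D)\<^sup>*" by (rule rtrancl_trans)
          then show False using zA by (auto simp: A_def)
        qed
        then show "x' \<in> - ?S - A" using x' by simp
      qed
    qed
    have cl: "closedin (top_of_set (- ?S)) A"
      unfolding closedin_def using op2 by (auto simp: A_def)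
    have "A = {} \<or> A = - ?S" using con op cl unfolding connected_clopen by blast
    moreover have "ctr q \<in> A" using ctr_notS[OF q] cellof_ctr[of q] by (simp add: A_def)
    moreover have "ctr r \<in> - ?S" "ctr r \<notin> A" using ctr_notS[OF r] cellof_ctr[of r] nr' by (auto simp: A_def)
    ultimately show False by blast
  qed
qed



type_synonym cube = "int \<times> int \<times> int"

definition hs :: "int \<Rightarrow> int \<Rightarrow> int \<Rightarrow> cube set" where
  "hs x y z = {(x,y,z),(x+1,y,z),(x,y+1,z),(x+1,y+1,z)}"
definition vx :: "int \<Rightarrow> int \<Rightarrow> int \<Rightarrow> cube set" where
  "vx x y z = {(x,y,z),(x+1,y,z),(x,y,z+1),(x+1,y,z+1)}"
definition vy :: "int \<Rightarrow> int \<Rightarrow> int \<Rightarrow> cube set" where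
  "vy x y z = {(x,y,z),(x,y+1,z),(x,y,z+1),(x,y+1,z+1)}"

lemma slab_iff: "slab S \<longleftrightarrow> (\<exists>x y z. S = hs x y z \<or> S = vx x y z \<or> S = vy x y z)"
proof -
  have 1: "{(x + i, y + j, z) | i j. i \<in> {0, 1} \<and> j \<in> {0, 1}} = hs x y z" for x y z :: int
    unfolding hs_def apply (rule subset_antisym) apply auto[1] apply simp done
  have 2: "{(x + i, y, z + k) | i k. i \<in> {0, 1} \<and> k \<in> {0, 1}} = vx x y z" for x y z :: int
    unfolding vx_def apply (rule subset_antisym) apply auto[1] apply simp done
  have 3: "{(x, y + j, z + k) | j k. j \<in> {0, 1} \<and> k \<in> {0, 1}} = vy x y z" for x y z :: int
    unfolding vy_def apply (rule subset_antisym) apply auto[1] apply simp done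
  show ?thesis by (simp only: slab_def 1 2 3)
qed

lemma cube2_iff: "cube2 C \<longleftrightarrow> (\<exists>x y z. C = hs x y z \<union> hs x y (z+1))"
proof -
  have "{(x + i, y + j, z + k) | i j k. i \<in> {0, 1} \<and> j \<in> {0, 1} \<and> k \<in> {0, 1}} = hs x y z \<union> hs x y (z+1)" for x y z :: int
  proof (rule subset_antisym)
    show "{(x + i, y + j, z + k) | i j k. i \<in> {0, 1} \<and> j \<in> {0, 1} \<and> k \<in> {0, 1}} \<subseteq> hs x y z \<union> hs x y (z+1)"
    proof
      fix s assume "s \<in> {(x + i, y + j, z + k) | i j k. i \<in> {0, 1} \<and> j \<in> {0, 1} \<and> k \<in> {0, 1::int}}"
      then obtain i j k :: int where s: "s = (x+i,y+j,z+k)" "i = 0 \<or> i = 1" "j = 0 \<or> j = 1" "k = 0 \<or> k = 1" by blast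
      from s(2,3,4) show "s \<in> hs x y z \<union> hs x y (z+1)" unfolding s(1) hs_def
        by (elim disjE) simp_all
    qed
    show "hs x y z \<union> hs x y (z+1) \<subseteq> {(x + i, y + j, z + k) | i j k. i \<in> {0, 1} \<and> j \<in> {0, 1} \<and> k \<in> {0, 1}}"
      unfolding hs_def by simp
  qed
  then show ?thesis unfolding cube2_def by simp
qed

lemma slab_ne: "slab S \<Longrightarrow> S \<noteq> {}"
  unfolding slab_iff hs_def vx_def vy_def by auto

lemma cyl_fin: "finite D \<Longrightarrow> finite (cylinder2 D)"
proof -
  assume "finite D"
  then have "finite ((\<lambda>(p,z). (fst p, snd p, z)) ` (D \<times> {0,1::int}))" by simp
  moreover have "cylinder2 D \<subseteq> (\<lambda>(p,z). (fst p, snd p, z)) ` (D \<times> {0,1::int})"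
    unfolding cylinder2_def by (auto simp: image_iff) force+
  ultimately show ?thesis by (rule finite_subset[rotated])
qed

lemma tiling_fin: "finite D \<Longrightarrow> slab_tiling (cylinder2 D) T \<Longrightarrow> finite T"
proof -
  assume f: "finite D" and t: "slab_tiling (cylinder2 D) T"
  have "T \<subseteq> Pow (cylinder2 D)" using t unfolding slab_tiling_def by blast
  moreover have "finite (Pow (cylinder2 D))" using cyl_fin[OF f] by simp
  ultimately show ?thesis by (rule finite_subset)
qed

lemma flip_pres:
  assumes T: "slab_tiling R T" and f: "flip T T'" shows "slab_tiling R T'"
proof -
  from f obtain S1 S2 S1' S2' where h: "S1 \<in> T" "S2 \<in> T" "S1 \<noteq> S2" "slab S1'" "slab S2'"
    "S1' \<inter> S2' = {}" "S1' \<union> S2' = S1 \<union> S2" "T' = (T - {S1, S2}) \<union> {S1', S2'}"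
    unfolding flip_def by blast
  have sl: "\<forall>S\<in>T. slab S" and dis: "\<forall>A\<in>T. \<forall>B\<in>T. A \<noteq> B \<longrightarrow> A \<inter> B = {}" and un: "\<Union>T = R"
    using T by (auto simp: slab_tiling_def)
  have o: "\<And>A. A \<in> T - {S1,S2} \<Longrightarrow> A \<inter> (S1 \<union> S2) = {}" using dis h by blast
  show ?thesis unfolding slab_tiling_def h(8)
  proof (intro conjI)
    show "\<forall>S\<in>T - {S1, S2} \<union> {S1', S2'}. slab S" using sl h(4,5) by blast
    show "\<forall>A\<in>T - {S1, S2} \<union> {S1', S2'}. \<forall>B\<in>T - {S1, S2} \<union> {S1', S2'}. A \<noteq> B \<longrightarrow> A \<inter> B = {}"
    proof (intro ballI impI)
      fix A B assume A: "A \<in> T - {S1, S2} \<union> {S1', S2'}" and B: "B \<in> T - {S1, S2} \<union> {S1', S2'}" and AB: "A \<noteq> B"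
      have sub: "\<And>C. C \<in> {S1', S2'} \<Longrightarrow> C \<subseteq> S1 \<union> S2" using h(7) by blast
      show "A \<inter> B = {}"
      proof (cases "A \<in> T - {S1,S2}")
        case True
        show ?thesis
        proof (cases "B \<in> T - {S1,S2}")
          case True then show ?thesis using dis AB \<open>A \<in> T - {S1,S2}\<close> by blast
        next
          case False then have "B \<subseteq> S1 \<union> S2" using B sub by blast
          then show ?thesis using o[OF \<open>A \<in> T - {S1,S2}\<close>] by blast
        qed
      next
        case False
        then have Ain: "A \<in> {S1', S2'}" using A by blast
        show ?thesis
        proof (cases "B \<in> T - {S1,S2}")
          case True then show ?thesis using o[OF True] sub[OF Ain] by blast
        next
          case False then have "B \<in> {S1', S2'}" using B by blast
          then show ?thesis using Ain AB h(6) by blast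
        qed
      qed
    qed
    show "\<Union>(T - {S1, S2} \<union> {S1', S2'}) = R" using un h(1,2,7) by blast
  qed
qed

lemma swap_back3: "h1 \<in> T \<Longrightarrow> h2 \<in> T \<Longrightarrow> v1 \<notin> T - {h1,h2} \<Longrightarrow> v2 \<notin> T - {h1,h2} \<Longrightarrow> 
  T = (((T - {h1,h2}) \<union> {v1,v2}) - {v1,v2}) \<union> {h1,h2}"
  by blast

lemma flip_sym:
  assumes T: "slab_tiling R T" and f: "flip T T'" shows "flip T' T"
proof -
  from f obtain S1 S2 S1' S2' where h: "S1 \<in> T" "S2 \<in> T" "S1 \<noteq> S2" "cube2 (S1 \<union> S2)" "slab S1'" "slab S2'"
    "S1' \<inter> S2' = {}" "S1' \<union> S2' = S1 \<union> S2" "{S1', S2'} \<noteq> {S1, S2}" "T' = (T - {S1, S2}) \<union> {S1', S2'}"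
    unfolding flip_def by blast
  have sl: "\<forall>S\<in>T. slab S" and dis: "\<forall>A\<in>T. \<forall>B\<in>T. A \<noteq> B \<longrightarrow> A \<inter> B = {}"
    using T by (auto simp: slab_tiling_def)
  have ne: "S1' \<noteq> {}" "S2' \<noteq> {}" using slab_ne h(5,6) by auto
  have n1: "S1' \<notin> T - {S1,S2}"
  proof
    assume a: "S1' \<in> T - {S1,S2}"
    then have "S1' \<inter> S1 = {}" "S1' \<inter> S2 = {}" using dis h(1,2) by auto
    then show False using h(8) ne(1) by blast
  qed
  have n2: "S2' \<notin> T - {S1,S2}"
  proof
    assume a: "S2' \<in> T - {S1,S2}"
    then have "S2' \<inter> S1 = {}" "S2' \<inter> S2 = {}" using dis h(1,2) by auto
    then show False using h(8) ne(2) by blast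
  qed
  have eq: "T = (T' - {S1', S2'}) \<union> {S1, S2}" unfolding h(10) by (rule swap_back3[OF h(1,2) n1 n2])
  show ?thesis unfolding flip_def
  proof (intro exI conjI)
    show "S1' \<in> T'" "S2' \<in> T'" unfolding h(10) by auto
    show "S1' \<noteq> S2'" using h(7) ne by blast
    show "cube2 (S1' \<union> S2')" using h(4,8) by simp
    show "slab S1" "slab S2" using sl h(1,2) by auto
    show "S1 \<inter> S2 = {}" using dis h(1,2,3) by blast
    show "S1 \<union> S2 = S1' \<union> S2'" using h(8) by simp
    show "{S1, S2} \<noteq> {S1', S2'}" using h(9) by metis
    show "T = T' - {S1', S2'} \<union> {S1, S2}" by (rule eq)
  qed
qed

lemma flips_pres: "flip\<^sup>*\<^sup>* T T' \<Longrightarrow> slab_tiling R T \<Longrightarrow> slab_tiling R T'"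
  by (induction rule: rtranclp_induct) (auto intro: flip_pres)

lemma flips_rev: "flip\<^sup>*\<^sup>* T T' \<Longrightarrow> slab_tiling R T \<Longrightarrow> flip\<^sup>*\<^sup>* T' T"
proof (induction rule: rtranclp_induct)
  case base then show ?case by simp
next
  case (step y z)
  have "slab_tiling R y" using flips_pres[OF step.hyps(1) step.prems] .
  then have "flip z y" using flip_sym step.hyps(2) by blast
  then show ?case using step.IH[OF step.prems] by (rule converse_rtranclp_into_rtranclp)
qed


lemma cyl_mem: "(a,b,c) \<in> cylinder2 D \<longleftrightarrow> (a,b) \<in> D \<and> (c = 0 \<or> c = 1)"
  by (simp add: cylinder2_def)

lemma tile_sub: "slab_tiling R T \<Longrightarrow> S \<in> T \<Longrightarrow> S \<subseteq> R"
  unfolding slab_tiling_def by blast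

lemma vx_z: "slab_tiling (cylinder2 D) T \<Longrightarrow> vx x y z \<in> T \<Longrightarrow> z = 0"
proof -
  assume "slab_tiling (cylinder2 D) T" "vx x y z \<in> T"
  then have "vx x y z \<subseteq> cylinder2 D" by (rule tile_sub)
  then have "(x,y,z) \<in> cylinder2 D" "(x,y,z+1) \<in> cylinder2 D" by (auto simp: vx_def)
  then show "z = 0" by (auto simp: cyl_mem)
qed

lemma vy_z: "slab_tiling (cylinder2 D) T \<Longrightarrow> vy x y z \<in> T \<Longrightarrow> z = 0"
proof -
  assume "slab_tiling (cylinder2 D) T" "vy x y z \<in> T"
  then have "vy x y z \<subseteq> cylinder2 D" by (rule tile_sub)
  then have "(x,y,z) \<in> cylinder2 D" "(x,y,z+1) \<in> cylinder2 D" by (auto simp: vy_def)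
  then show "z = 0" by (auto simp: cyl_mem)
qed

lemma vx_not_hs: "vx a b c \<noteq> hs x y z"
proof
  assume "vx a b c = hs x y z"
  then have "(a,b,c) \<in> hs x y z" "(a,b,c+1) \<in> hs x y z" by (auto simp: vx_def)
  then show False by (auto simp: hs_def)
qed

lemma hs_not_vx: "hs x y z \<noteq> vx a b c" using vx_not_hs by metis

definition ishs :: "cube set \<Rightarrow> bool" where "ishs S \<longleftrightarrow> (\<exists>x y z. S = hs x y z)"

lemma reduce:
  assumes fin: "finite D"
  shows "slab_tiling (cylinder2 D) T \<Longrightarrow> \<exists>V. flip\<^sup>*\<^sup>* T V \<and> slab_tiling (cylinder2 D) V \<and> (\<forall>S\<in>V. \<exists>x y. S = vx x y 0 \<or> S = vy x y 0)"
proof (induction "card {S\<in>T. ishs S}" arbitrary: T rule: less_induct)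
  case less
  note T = less.prems
  let ?R = "cylinder2 D"
  have sl: "\<And>S. S \<in> T \<Longrightarrow> slab S" and dis: "\<And>A B. A \<in> T \<Longrightarrow> B \<in> T \<Longrightarrow> A \<noteq> B \<Longrightarrow> A \<inter> B = {}"
    and un: "\<Union>T = ?R" using T by (auto simp: slab_tiling_def)
  have finT: "finite T" by (rule tiling_fin[OF fin T])
  show ?case
  proof (cases "{S\<in>T. ishs S} = {}")
    case True
    have "\<forall>S\<in>T. \<exists>x y. S = vx x y 0 \<or> S = vy x y 0"
    proof
      fix S assume S: "S \<in> T"
      then have "\<not> ishs S" using True by blast
      obtain x y z where xyz: "S = hs x y z \<or> S = vx x y z \<or> S = vy x y z" using sl[OF S] unfolding slab_iff by blast
      have "S \<noteq> hs x y z" using \<open>\<not> ishs S\<close> unfolding ishs_def by blast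
      with xyz have "S = vx x y z \<or> S = vy x y z" by simp
      then show "\<exists>x y. S = vx x y 0 \<or> S = vy x y 0"
      proof
        assume e: "S = vx x y z" then have "z = 0" using vx_z[OF T] S by simp
        then show ?thesis using e by blast
      next
        assume e: "S = vy x y z" then have "z = 0" using vy_z[OF T] S by simp
        then show ?thesis using e by blast
      qed
    qed
    then show ?thesis using T by blast
  next
    case False
    define B where "B = {(x,y). \<exists>z. hs x y z \<in> T}"
    have BD: "B \<subseteq> D"
    proof
      fix p assume "p \<in> B"
      then obtain x y z where p: "p = (x,y)" "hs x y z \<in> T" by (auto simp: B_def)
      then have "(x,y,z) \<in> ?R" using un by (auto simp: hs_def)
      then show "p \<in> D" using p by (simp add: cyl_mem)
    qed
    have finB: "finite B" using finite_subset[OF BD fin] .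
    have Bne: "B \<noteq> {}" using False by (auto simp: B_def ishs_def)
    define x0 where "x0 = Min (fst ` B)"
    have x0in: "x0 \<in> fst ` B" unfolding x0_def using finB Bne by (intro Min_in) auto
    define Y where "Y = {y. (x0,y) \<in> B}"
    have "Y \<subseteq> snd ` B" unfolding Y_def by (auto simp: image_iff) force
    then have finY: "finite Y" using finB by (meson finite_imageI finite_subset)
    have Yne: "Y \<noteq> {}" using x0in by (auto simp: Y_def)
    define y0 where "y0 = Min Y"
    have y0in: "(x0, y0) \<in> B" using Min_in[OF finY Yne] by (simp add: y0_def Y_def)
    have minB: "x0 \<le> x' \<and> (x' = x0 \<longrightarrow> y0 \<le> y')" if "(x',y') \<in> B" for x' y'
    proof -
      have "x0 \<le> x'" unfolding x0_def using finB that by (intro Min_le) force+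
      moreover have "x' = x0 \<longrightarrow> y0 \<le> y'" unfolding y0_def using finY that by (auto simp: Y_def)
      ultimately show ?thesis by simp
    qed
    obtain z0 where z0: "hs x0 y0 z0 \<in> T" using y0in by (auto simp: B_def)
    have "(x0,y0,z0) \<in> ?R" using z0 un by (auto simp: hs_def)
    then have z01: "z0 = 0 \<or> z0 = 1" and x0y0D: "(x0,y0) \<in> D" by (auto simp: cyl_mem)
    define z1 where "z1 = 1 - z0"
    have "(x0,y0,z1) \<in> ?R" using z01 x0y0D by (auto simp: cyl_mem z1_def)
    then obtain S' where S': "S' \<in> T" "(x0,y0,z1) \<in> S'" using un by blast
    have notin: "(x0,y0,z1) \<notin> hs x0 y0 z0" using z01 by (auto simp: hs_def z1_def)
    have other: "hs x0 y0 z1 \<in> T"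
    proof -
      from sl[OF S'(1)] obtain x' y' z' where "S' = hs x' y' z' \<or> S' = vx x' y' z' \<or> S' = vy x' y' z'"
        unfolding slab_iff by blast
      then show ?thesis
      proof (elim disjE)
        assume e: "S' = hs x' y' z'"
        then have c: "z' = z1" "x' = x0 \<or> x' = x0 - 1" "y' = y0 \<or> y' = y0 - 1" using S'(2) by (auto simp: hs_def)
        have "(x',y') \<in> B" using S'(1) e by (auto simp: B_def)
        then have "x' = x0" "y' = y0" using minB[of x' y'] c by auto
        then show ?thesis using e c S'(1) by simp
      next
        assume e: "S' = vx x' y' z'"
        then have "z' = 0" using vx_z[OF T] S'(1) by simp
        then have "(x0,y0,z0) \<in> S'" using e S'(2) z01 by (auto simp: vx_def z1_def)
        moreover have "(x0,y0,z0) \<in> hs x0 y0 z0" by (simp add: hs_def)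
        moreover have "S' \<noteq> hs x0 y0 z0" using notin S'(2) by blast
        ultimately show ?thesis using dis[OF S'(1) z0] by blast
      next
        assume e: "S' = vy x' y' z'"
        then have "z' = 0" using vy_z[OF T] S'(1) by simp
        then have "(x0,y0,z0) \<in> S'" using e S'(2) z01 by (auto simp: vy_def z1_def)
        moreover have "(x0,y0,z0) \<in> hs x0 y0 z0" by (simp add: hs_def)
        moreover have "S' \<noteq> hs x0 y0 z0" using notin S'(2) by blast
        ultimately show ?thesis using dis[OF S'(1) z0] by blast
      qed
    qed
    have h0: "hs x0 y0 0 \<in> T" and h1: "hs x0 y0 1 \<in> T" using z0 other z01 by (auto simp: z1_def)
    define S1 where "S1 = hs x0 y0 0"
    define S2 where "S2 = hs x0 y0 1"
    define S1' where "S1' = vx x0 y0 0"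
    define S2' where "S2' = vx x0 (y0+1) 0"
    define T' where "T' = (T - {S1, S2}) \<union> {S1', S2'}"
    have ne12: "S1 \<noteq> S2"
    proof
      assume "S1 = S2"
      moreover have "(x0,y0,0) \<in> S1" "(x0,y0,0) \<notin> S2" unfolding S1_def S2_def hs_def by auto
      ultimately show False by simp
    qed
    have fl: "flip T T'" unfolding flip_def
    proof (intro exI conjI)
      show "S1 \<in> T" "S2 \<in> T" using h0 h1 by (simp_all add: S1_def S2_def)
      show "S1 \<noteq> S2" by (rule ne12)
      show "cube2 (S1 \<union> S2)" unfolding cube2_iff S1_def S2_def by (rule exI[of _ x0], rule exI[of _ y0], rule exI[of _ 0]) simp
      show "slab S1'" "slab S2'" unfolding slab_iff S1'_def S2'_def by blast+
      show "S1' \<inter> S2' = {}" unfolding S1'_def S2'_def vx_def by auto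
      show "S1' \<union> S2' = S1 \<union> S2" unfolding S1'_def S2'_def S1_def S2_def vx_def hs_def by auto
      have "(x0,y0,1) \<in> S1'" "(x0,y0,1) \<notin> S1" "(x0,y0,0) \<in> S1'" "(x0,y0,0) \<notin> S2"
        unfolding S1'_def S1_def S2_def vx_def hs_def by auto
      then show "{S1', S2'} \<noteq> {S1, S2}" by (metis insertCI doubleton_eq_iff)
      show "T' = T - {S1, S2} \<union> {S1', S2'}" by (simp add: T'_def)
    qed
    have tl: "slab_tiling ?R T'" by (rule flip_pres[OF T fl])
    have "{S\<in>T'. ishs S} \<subseteq> {S\<in>T. ishs S} - {S1}"
      unfolding T'_def S1'_def S2'_def ishs_def using hs_not_vx by auto
    moreover have "S1 \<in> {S\<in>T. ishs S}" using h0 by (auto simp: S1_def ishs_def)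
    moreover have "finite {S\<in>T. ishs S}" using finT by simp
    ultimately have "card {S\<in>T'. ishs S} < card {S\<in>T. ishs S}"
      by (meson card_Diff1_less card_mono finite_Diff le_less_trans)
    then obtain V where V: "flip\<^sup>*\<^sup>* T' V" "slab_tiling ?R V" "\<forall>S\<in>V. \<exists>x y. S = vx x y 0 \<or> S = vy x y 0"
      using less.hyps tl by blast
    then show ?thesis using fl by (meson converse_rtranclp_into_rtranclp)
  qed
qed

definition Lf :: "cell set \<Rightarrow> cube set" where
  "Lf d = {(a,b,c). (a,b) \<in> d \<and> (c = 0 \<or> c = 1)}"
definition Pr :: "cube set \<Rightarrow> cell set" where
  "Pr S = {(a,b). (a,b,0) \<in> S}"

lemma Lf_h: "Lf {(x,y),(x+1,y)} = vx x y 0" unfolding Lf_def vx_def by auto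
lemma Lf_v: "Lf {(x,y),(x,y+1)} = vy x y 0" unfolding Lf_def vy_def by auto
lemma Pr_h: "Pr (vx x y 0) = {(x,y),(x+1,y)}" unfolding Pr_def vx_def by auto
lemma Pr_v: "Pr (vy x y 0) = {(x,y),(x,y+1)}" unfolding Pr_def vy_def by auto
lemma inj_Lf: "inj Lf"
proof (rule injI)
  fix d1 d2 assume "Lf d1 = Lf d2"
  then have "(a,b) \<in> d1 \<longleftrightarrow> (a,b) \<in> d2" for a b
    unfolding Lf_def by (metis (mono_tags, lifting) case_prodI mem_Collect_eq case_prodD)
  then show "d1 = d2" by auto
qed

lemma vert_dom:
  assumes V: "slab_tiling (cylinder2 D) V" and vv: "\<forall>S\<in>V. \<exists>x y. S = vx x y 0 \<or> S = vy x y 0"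
  shows "\<exists>Td. dtiling D Td \<and> V = Lf ` Td"
proof -
  have dis: "\<And>A B. A \<in> V \<Longrightarrow> B \<in> V \<Longrightarrow> A \<noteq> B \<Longrightarrow> A \<inter> B = {}"
    and un: "\<Union>V = cylinder2 D" using V by (auto simp: slab_tiling_def)
  have LP: "Lf (Pr S) = S" if "S \<in> V" for S
    using vv that by (auto simp: Pr_h Pr_v Lf_h Lf_v)
  have "V = Lf ` Pr ` V" using LP by (force simp: image_image)
  moreover have "dtiling D (Pr ` V)" unfolding dtiling_def
  proof (intro conjI ballI impI)
    fix d assume "d \<in> Pr ` V"
    then obtain S where S: "S \<in> V" "d = Pr S" by blast
    then obtain x y where "S = vx x y 0 \<or> S = vy x y 0" using vv by blast
    then show "\<exists>p q. nbr p q \<and> d = {p,q}"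
    proof
      assume "S = vx x y 0"
      then have "d = {(x,y),(x+1,y)}" using S by (simp add: Pr_h)
      moreover have "nbr (x,y) (x+1,y)" by (simp add: nbr_def)
      ultimately show ?thesis by blast
    next
      assume "S = vy x y 0"
      then have "d = {(x,y),(x,y+1)}" using S by (simp add: Pr_v)
      moreover have "nbr (x,y) (x,y+1)" by (simp add: nbr_def)
      ultimately show ?thesis by blast
    qed
  next
    fix d1 d2 assume "d1 \<in> Pr ` V" "d2 \<in> Pr ` V" "d1 \<noteq> d2"
    then obtain S1 S2 where "S1 \<in> V" "S2 \<in> V" "d1 = Pr S1" "d2 = Pr S2" "S1 \<noteq> S2" by blast
    then show "d1 \<inter> d2 = {}" using dis unfolding Pr_def by blast
  next
    show "\<Union>(Pr ` V) = D"
    proof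
      show "\<Union>(Pr ` V) \<subseteq> D"
      proof
        fix p assume "p \<in> \<Union>(Pr ` V)"
        then obtain S a b where "S \<in> V" "p = (a,b)" "(a,b,0) \<in> S" by (auto simp: Pr_def)
        then have "(a,b,0) \<in> cylinder2 D" using un by blast
        then show "p \<in> D" using \<open>p = (a,b)\<close> by (simp add: cyl_mem)
      qed
      show "D \<subseteq> \<Union>(Pr ` V)"
      proof
        fix p assume "p \<in> D"
        then have "(fst p, snd p, 0) \<in> cylinder2 D" by (simp add: cyl_mem)
        then obtain S where "S \<in> V" "(fst p, snd p, 0) \<in> S" using un by blast
        then show "p \<in> \<Union>(Pr ` V)" by (auto simp: Pr_def)
      qed
    qed
  qed
  ultimately show ?thesis by blast
qed

lemma lift_flip: assumes f: "dflip Td Td'" shows "flip (Lf ` Td) (Lf ` Td')"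
proof -
  from f obtain x y where
    "({(x,y),(x+1,y)} \<in> Td \<and> {(x,y+1),(x+1,y+1)} \<in> Td \<and>
       Td' = (Td - {{(x,y),(x+1,y)}, {(x,y+1),(x+1,y+1)}}) \<union> {{(x,y),(x,y+1)}, {(x+1,y),(x+1,y+1)}}) \<or>
     ({(x,y),(x,y+1)} \<in> Td \<and> {(x+1,y),(x+1,y+1)} \<in> Td \<and>
       Td' = (Td - {{(x,y),(x,y+1)}, {(x+1,y),(x+1,y+1)}}) \<union> {{(x,y),(x+1,y)}, {(x,y+1),(x+1,y+1)}})"
    unfolding dflip_def by blast
  then show ?thesis
  proof
    assume h: "{(x,y),(x+1,y)} \<in> Td \<and> {(x,y+1),(x+1,y+1)} \<in> Td \<and>
       Td' = (Td - {{(x,y),(x+1,y)}, {(x,y+1),(x+1,y+1)}}) \<union> {{(x,y),(x,y+1)}, {(x+1,y),(x+1,y+1)}}"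
    have img: "Lf ` Td' = (Lf ` Td - {vx x y 0, vx x (y+1) 0}) \<union> {vy x y 0, vy (x+1) y 0}"
      using h inj_Lf by (simp add: image_set_diff Lf_h Lf_v[of x y] Lf_v[of "x+1" y] Lf_h[of x "y+1"])
    show ?thesis unfolding flip_def
    proof (intro exI conjI)
      show "vx x y 0 \<in> Lf ` Td" "vx x (y+1) 0 \<in> Lf ` Td" using h by (metis Lf_h image_eqI)+
      show "vx x y 0 \<noteq> vx x (y+1) 0"
      proof
        assume e: "vx x y 0 = vx x (y+1) 0"
        have "(x,y,0) \<in> vx x y 0" "(x,y,0) \<notin> vx x (y+1) 0" unfolding vx_def by auto
        then show False using e by simp
      qed
      show "cube2 (vx x y 0 \<union> vx x (y+1) 0)" unfolding cube2_iff
        by (rule exI[of _ x], rule exI[of _ y], rule exI[of _ 0]) (auto simp: vx_def hs_def)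
      show "slab (vy x y 0)" "slab (vy (x+1) y 0)" unfolding slab_iff by blast+
      show "vy x y 0 \<inter> vy (x+1) y 0 = {}" unfolding vy_def by auto
      show "vy x y 0 \<union> vy (x+1) y 0 = vx x y 0 \<union> vx x (y+1) 0" unfolding vy_def vx_def by auto
      have "(x,y+1,0) \<in> vy x y 0" "(x,y+1,0) \<notin> vx x y 0" "(x,y,0) \<in> vy x y 0" "(x,y,0) \<notin> vx x (y+1) 0"
        unfolding vx_def vy_def by auto
      then show "{vy x y 0, vy (x+1) y 0} \<noteq> {vx x y 0, vx x (y+1) 0}" by (metis insertCI doubleton_eq_iff)
      show "Lf ` Td' = Lf ` Td - {vx x y 0, vx x (y+1) 0} \<union> {vy x y 0, vy (x+1) y 0}" by (rule img)
    qed
  next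
    assume h: "{(x,y),(x,y+1)} \<in> Td \<and> {(x+1,y),(x+1,y+1)} \<in> Td \<and>
       Td' = (Td - {{(x,y),(x,y+1)}, {(x+1,y),(x+1,y+1)}}) \<union> {{(x,y),(x+1,y)}, {(x,y+1),(x+1,y+1)}}"
    have img: "Lf ` Td' = (Lf ` Td - {vy x y 0, vy (x+1) y 0}) \<union> {vx x y 0, vx x (y+1) 0}"
      using h inj_Lf by (simp add: image_set_diff Lf_h Lf_v[of x y] Lf_v[of "x+1" y] Lf_h[of x "y+1"])
    show ?thesis unfolding flip_def
    proof (intro exI conjI)
      show "vy x y 0 \<in> Lf ` Td" "vy (x+1) y 0 \<in> Lf ` Td" using h by (metis Lf_v image_eqI)+
      show "vy x y 0 \<noteq> vy (x+1) y 0"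
      proof
        assume e: "vy x y 0 = vy (x+1) y 0"
        have "(x,y,0) \<in> vy x y 0" "(x,y,0) \<notin> vy (x+1) y 0" unfolding vy_def by auto
        then show False using e by simp
      qed
      show "cube2 (vy x y 0 \<union> vy (x+1) y 0)" unfolding cube2_iff
        by (rule exI[of _ x], rule exI[of _ y], rule exI[of _ 0]) (auto simp: vy_def hs_def)
      show "slab (vx x y 0)" "slab (vx x (y+1) 0)" unfolding slab_iff by blast+
      show "vx x y 0 \<inter> vx x (y+1) 0 = {}" unfolding vx_def by auto
      show "vx x y 0 \<union> vx x (y+1) 0 = vy x y 0 \<union> vy (x+1) y 0" unfolding vy_def vx_def by auto
      have "(x+1,y,0) \<in> vx x y 0" "(x+1,y,0) \<notin> vy x y 0" "(x,y,0) \<in> vx x y 0" "(x,y,0) \<notin> vy (x+1) y 0"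
        unfolding vx_def vy_def by auto
      then show "{vx x y 0, vx x (y+1) 0} \<noteq> {vy x y 0, vy (x+1) y 0}" by (metis insertCI doubleton_eq_iff)
      show "Lf ` Td' = Lf ` Td - {vy x y 0, vy (x+1) y 0} \<union> {vx x y 0, vx x (y+1) 0}" by (rule img)
    qed
  qed
qed

lemma lift_flips: "dflip\<^sup>*\<^sup>* Td Td' \<Longrightarrow> flip\<^sup>*\<^sup>* (Lf ` Td) (Lf ` Td')"
  by (induction rule: rtranclp_induct) (auto intro: lift_flip rtranclp.rtrancl_into_rtrancl)

theorem lemma5p1:
  fixes D :: "(int \<times> int) set"
  assumes "quadriculated_disk D"
  shows "{T. slab_tiling (cylinder2 D) T} = {} \<or>
         (\<forall>T1 T2. slab_tiling (cylinder2 D) T1 \<longrightarrow> slab_tiling (cylinder2 D) T2 \<longrightarrow>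
            flip\<^sup>*\<^sup>* T1 T2)"
proof -
  have fin: "finite D" and ne: "D \<noteq> {}" using assms by (auto simp: quadriculated_disk_def)
  have Q: "Qc D" by (rule disk_Qc[OF assms])
  define a where "a = Min (fst ` D) - 1"
  define b where "b = Max (fst ` D) + 1"
  interpret reg D a b
  proof
    show "finite D" by (rule fin)
    show "a < fst p" if "p \<in> D" for p
    proof -
      have "Min (fst ` D) \<le> fst p" using fin that by (intro Min_le) auto
      then show ?thesis unfolding a_def by linarith
    qed
    show "fst p < b" if "p \<in> D" for p
    proof -
      have "fst p \<le> Max (fst ` D)" using fin that by (intro Max_ge) auto
      then show ?thesis unfolding b_def by linarith
    qed
    show "Qc D" by (rule Q)
  qed
  show ?thesis
  proof (rule disjI2, intro allI impI)
    fix T1 T2 assume t1: "slab_tiling (cylinder2 D) T1" and t2: "slab_tiling (cylinder2 D) T2"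
    obtain V1 where V1: "flip\<^sup>*\<^sup>* T1 V1" "slab_tiling (cylinder2 D) V1" "\<forall>S\<in>V1. \<exists>x y. S = vx x y 0 \<or> S = vy x y 0"
      using reduce[OF fin t1] by blast
    obtain V2 where V2: "flip\<^sup>*\<^sup>* T2 V2" "slab_tiling (cylinder2 D) V2" "\<forall>S\<in>V2. \<exists>x y. S = vx x y 0 \<or> S = vy x y 0"
      using reduce[OF fin t2] by blast
    obtain Td1 where d1: "dtiling D Td1" "V1 = Lf ` Td1" using vert_dom[OF V1(2,3)] by blast
    obtain Td2 where d2: "dtiling D Td2" "V2 = Lf ` Td2" using vert_dom[OF V2(2,3)] by blast
    have "dflip\<^sup>*\<^sup>* Td1 Td2" by (rule thurston[OF d1(1) d2(1)])
    then have "flip\<^sup>*\<^sup>* V1 V2" unfolding d1(2) d2(2) by (rule lift_flips)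
    moreover have "flip\<^sup>*\<^sup>* V2 T2" by (rule flips_rev[OF V2(1) t2])
    ultimately show "flip\<^sup>*\<^sup>* T1 T2" using V1(1) by (meson rtranclp_trans)
  qed
qed

end
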